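(* Let $k\ge1$ and $\tilde d=(d_1,\dots,d_k)$ with integers $d_i\ge2$. Consider the cone percolation process with radius of influence $R$ on the rooted $k$-periodic tree $\mathbb{T}^+_{\tilde d}$, with law $\mathbb{P}_+$ and survival event $V$. Let $\rho$ be the smallest non-negative root of $$\sum_{i=0}^{k-1}\mathbb{E}\big(\rho^{c_iG^R}I_i(R)\big)+(1-\rho)p_0=\rho,$$ and $\psi$ the smallest non-negative root of $$\sum_{i=0}^{k-1}\mathbb{E}\big(\psi^{\lfloor \bar c_i h_i(R)\rfloor}I_i(R)\big)=\psi.$$ Then $1-\rho\le \mathbb{P}_+(V)\le 1-\psi$.
   Context: Cone percolation process: Let $\mathbb{T}$ be a tree with origin $\mathcal{O}$ and graph distance $d(\cdot,\cdot)$. Write $u\le v$ if $u$ lies on the path from $\mathcal{O}$ to $v$. Let $R$ be a random variable with values in $\{0,1,2,\dots\}$, $p_k=\mathbb{P}(R=k)$, and assume $p_0\in(0,1)$. Let $\{R_v\}$ be i.i.d. copies of $R$ indexed by the vertices. For each vertex $u$ let $B_u=\{v: u\le v,\ d(u,v)\le R_u\}$. Set $I_0=\{\mathcal{O}\}$, $I_{n+1}=\bigcup_{u\in I_n}B_u$, $I=\bigcup_n I_n$; survival is the event $V=\{|I|=\infty\}$. Periodic trees: the $k$-periodic tree $\mathbb{T}_{\tilde d}$ is the tree with origin $\mathcal{O}$ in which every vertex at distance $nk+i-1$ from $\mathcal{O}$ ($n\ge0$, $i\in\{1,\dots,k\}$) has degree $d_i+1$; $\mathbb{T}^+_{\tilde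 d}$ is obtained by choosing a neighbour $u$ of $\mathcal{O}$ and deleting all vertices $w$ with $u\le w$. Notation: $d_{(1)}\le\dots\le d_{(k)}$ are the entries of $\tilde d$ in increasing order; $G=(\prod_{j=1}^k d_j)^{1/k}$; $c_0=\bar c_0=1$, and for $i=1,\dots,k-1$, $c_i=\prod_{j=1}^i d_{(j)}/G^i$, $\bar c_i=\prod_{j=k+1-i}^k d_{(j)}/G^i$. For $i=0,\dots,k-1$, $I_i(R)=1$ if $R=nk+i$ for some integer $n\ge0$ and $0$ otherwise. Let $\underline{x}_{n,0}=(\prod_{j=1}^k d_j)^n$ and $\underline{x}_{n,i}=(\prod_{j=1}^k d_j)^n\prod_{j=1}^i d_{(j)}$ for $i\ge1$. For $R\equiv i\pmod k$, with $N=(R-i)/k$, $$h_i(R)=\Big[\sum_{m=0}^{N-1}\sum_{j=0}^{k-1}(\underline{x}_{m,j})^{-1}+\sum_{j=0}^{i-1}(\underline{x}_{N,j})^{-1}\Big]G^R$$ (only used when $I_i(R)=1$). *)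

theory Defs
  imports "HOL-Probability.Probability" "HOL-Library.Sublist"
begin

text \<open>The k-periodic tree is given by the list d = [d_1,...,d_k].
  Vertices of the rooted tree T^+_d are finite lists of child indices; the root
  is the empty list. A vertex at depth m (= length of the list) has
  d_{(m mod k)+1} = d ! (m mod k) children. The ancestor order u \<le> v is the
  prefix order and d(u,v) = length v - length u when u is a prefix of v.\<close>

definition ptree :: "nat list \<Rightarrow> nat list set" where
  "ptree d = {vs. \<forall>j<length vs. vs ! j < d ! (j mod length d)}"

definition cone_B :: "nat list \<Rightarrow> (nat list \<Rightarrow> nat) \<Rightarrow> nat list \<Rightarrow> nat list set" where
  "cone_B d Rv u = {v \<in> ptree d. prefix u v \<and> length v - length u \<le> Rv u}"

primrec cone_I :: "nat list \<Rightarrow> (nat list \<Rightarrow> nat) \<Rightarrow> nat \<Rightarrow> nat list set" where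
  "cone_I d Rv 0 = {[]}"
| "cone_I d Rv (Suc n) = (\<Union>u\<in>cone_I d Rv n. cone_B d Rv u)"

definition cone_set :: "nat list \<Rightarrow> (nat list \<Rightarrow> nat) \<Rightarrow> nat list set" where
  "cone_set d Rv = (\<Union>n. cone_I d Rv n)"

text \<open>Constants. dsort d j = d_(j), 1-indexed order statistics.\<close>
definition dsort :: "nat list \<Rightarrow> nat \<Rightarrow> nat" where
  "dsort d j = sort d ! (j - 1)"

definition Gm :: "nat list \<Rightarrow> real" where
  "Gm d = root (length d) (real (prod_list d))"

definition cc :: "nat list \<Rightarrow> nat \<Rightarrow> real" where
  "cc d i = (\<Prod>j=1..i. real (dsort d j)) / Gm d ^ i"

definition cbar :: "nat list \<Rightarrow> nat \<Rightarrow> real" where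
  "cbar d i = (\<Prod>j=length d + 1 - i..length d. real (dsort d j)) / Gm d ^ i"

definition xx :: "nat list \<Rightarrow> nat \<Rightarrow> nat \<Rightarrow> real" where
  "xx d n i = real (prod_list d) ^ n * (\<Prod>j=1..i. real (dsort d j))"

definition hh :: "nat list \<Rightarrow> nat \<Rightarrow> nat \<Rightarrow> real" where
  "hh d i r = (let N = (r - i) div length d in
     ((\<Sum>m<N. \<Sum>j<length d. 1 / xx d m j) + (\<Sum>j<i. 1 / xx d N j)) * Gm d ^ r)"

definition indI :: "nat list \<Rightarrow> nat \<Rightarrow> nat \<Rightarrow> real" where
  "indI d i r = (if r mod length d = i then 1 else 0)"

end

theory Submission
  imports Defs
begin

lemma sorted_nth_le_filter:
  fixes L :: "nat list"
  assumes "sorted L" "m < length L" "length (filter (\<lambda>x. x \<le> y) L) \<ge> Suc m"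
  shows "L ! m \<le> y"
proof (rule ccontr)
  assume "\<not> L ! m \<le> y"
  hence big: "\<forall>p. m \<le> p \<and> p < length L \<longrightarrow> \<not> L ! p \<le> y"
    using assms(1) by (meson dual_order.trans sorted_nth_mono)
  have "length (filter (\<lambda>x. x \<le> y) L) = card {p. p < length L \<and> L ! p \<le> y}"
    by (rule length_filter_conv_card)
  also have "\<dots> \<le> card {..<m}"
    by (rule card_mono) (auto, metis big leI)
  finally show False using assms(3) by simp
qed

lemma sort_nth_le_sub:
  fixes A B :: "nat list"
  assumes sub: "mset A \<subseteq># mset B" and m: "m < length A"
  shows "sort B ! m \<le> sort A ! m"
proof -
  let ?y = "sort A ! m"
  have "length (filter (\<lambda>x. x \<le> ?y) (sort A)) = card {p. p < length A \<and> sort A ! p \<le> ?y}"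
    by (simp add: length_filter_conv_card)
  also have "\<dots> \<ge> card {..m}"
    by (rule card_mono) (use m in \<open>auto intro: sorted_nth_mono\<close>)
  finally have c1: "length (filter (\<lambda>x. x \<le> ?y) (sort A)) \<ge> Suc m" by simp
  have "size (filter_mset (\<lambda>x. x \<le> ?y) (mset A)) \<le> size (filter_mset (\<lambda>x. x \<le> ?y) (mset B))"
    by (intro size_mset_mono multiset_filter_mono sub)
  hence "length (filter (\<lambda>x. x \<le> ?y) (sort A)) \<le> length (filter (\<lambda>x. x \<le> ?y) (sort B))"
    by (metis mset_filter mset_sort size_mset)
  with c1 have c2: "length (filter (\<lambda>x. x \<le> ?y) (sort B)) \<ge> Suc m" by simp
  have "length A \<le> length B" using sub by (metis size_mset size_mset_mono)
  with m have "m < length (sort B)" by simp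
  from sorted_nth_le_filter[OF _ this c2] show ?thesis by simp
qed

lemma prod_take_sort_le:
  fixes A B :: "nat list"
  assumes sub: "mset A \<subseteq># mset B"
  shows "(\<Prod>j<length A. sort B ! j) \<le> prod_list A"
proof -
  have "(\<Prod>j<length A. sort B ! j) \<le> (\<Prod>j<length A. sort A ! j)"
    by (rule prod_mono) (use sort_nth_le_sub[OF sub] in auto)
  also have "\<dots> = prod_list (sort A)"
    by (simp add: prod.list_conv_set_nth atLeast0LessThan)
  also have "\<dots> = prod_list A"
    by (metis mset_sort prod_mset_prod_list)
  finally show ?thesis .
qed

lemma prod_subset_lower:
  fixes d :: "nat list"
  assumes S: "S \<subseteq> {..<length d}"
  shows "(\<Prod>j<card S. sort d ! j) \<le> (\<Prod>j\<in>S. d ! j)"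
proof -
  let ?A = "map (nth d) (sorted_list_of_set S)"
  have fS: "finite S" using S finite_subset by blast
  have len: "length ?A = card S" by simp
  have pA: "prod_list ?A = (\<Prod>j\<in>S. d ! j)"
    using fS by (simp add: prod.distinct_set_conv_list[symmetric])
  have "mset ?A \<subseteq># mset d"
  proof -
    have "mset ?A = image_mset (nth d) (mset (sorted_list_of_set S))" by simp
    also have "mset (sorted_list_of_set S) = mset_set S"
      by (metis mset_sorted_list_of_multiset sorted_list_of_mset_set)
    also have "mset_set S \<subseteq># mset_set {..<length d}" using S fS
      by (simp add: subset_imp_msubset_mset_set)
    hence "image_mset (nth d) (mset_set S) \<subseteq># image_mset (nth d) (mset_set {..<length d})"
      by (rule image_mset_subseteq_mono)
    also have "image_mset (nth d) (mset_set {..<length d}) = mset d"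
      by (metis mset_map map_nth mset_upt atLeast0LessThan)
    finally show ?thesis .
  qed
  from prod_take_sort_le[OF this] len pA show ?thesis by simp
qed

definition Kp :: "nat list \<Rightarrow> nat \<Rightarrow> nat \<Rightarrow> nat" where
  "Kp d s r = (\<Prod>j<r. d ! ((s + j) mod length d))"

definition Ep :: "nat list \<Rightarrow> nat \<Rightarrow> nat \<Rightarrow> nat" where
  "Ep d s r = (\<Sum>t\<le>r. Kp d s t)"

lemma Kp_0[simp]: "Kp d s 0 = 1" by (simp add: Kp_def)

lemma Kp_Suc: "Kp d s (Suc t) = d ! (s mod length d) * Kp d (Suc s) t"
  unfolding Kp_def by (subst prod.lessThan_Suc_shift) simp

lemma Ep_0[simp]: "Ep d s 0 = 1" by (simp add: Ep_def)

lemma Ep_Suc: "Ep d s (Suc a) = 1 + d ! (s mod length d) * Ep d (Suc s) a"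
  unfolding Ep_def by (subst sum.atMost_Suc_shift) (simp add: Kp_Suc sum_distrib_left)

lemma Kp_add: "Kp d s (a + b) = Kp d s a * Kp d (s + a) b"
  by (induction b) (simp_all add: Kp_def add.assoc)

lemma Kp_mod: "Kp d (s mod length d) b = Kp d s b"
  unfolding Kp_def by (simp add: mod_add_left_eq)

lemma Kp_shift_k: "Kp d (s + length d) b = Kp d s b"
  by (metis Kp_mod mod_add_self2)

lemma inj_mod_shift: "(i::nat) \<le> k \<Longrightarrow> inj_on (\<lambda>j. (s + j) mod k) {..<i}"
proof (rule inj_onI)
  fix x y assume "i \<le> k" "x \<in> {..<i}" "y \<in> {..<i}" "(s + x) mod k = (s + y) mod k"
  note eq = this
  have xy: "x < k" "y < k" using \<open>x \<in> {..<i}\<close> \<open>y \<in> {..<i}\<close> \<open>i \<le> k\<close> by auto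
  show "x = y"
  proof (cases "x \<le> y")
    case True
    then have "k dvd (s+y) - (s+x)" using eq by (subst mod_eq_dvd_iff_nat[symmetric]) auto
    hence "k dvd y - x" by simp
    moreover have "y - x < k" using xy by simp
    ultimately show ?thesis using True nat_dvd_not_less[of "y - x" k] by (cases "y - x = 0") auto
  next
    case False
    then have "k dvd (s+x) - (s+y)" using eq by (subst mod_eq_dvd_iff_nat[symmetric]) auto
    hence "k dvd x - y" by simp
    moreover have "x - y < k" using xy by simp
    ultimately show ?thesis using False nat_dvd_not_less[of "x - y" k] by (cases "x - y = 0") auto
  qed
qed

lemma Kp_set: 
  assumes "i \<le> length d"
  shows "Kp d s i = (\<Prod>j\<in>(\<lambda>j. (s + j) mod length d) ` {..<i}. d ! j)"
  unfolding Kp_def using prod.reindex[OF inj_mod_shift[OF assms, of s], of "nth d"]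
  by (simp add: comp_def)

lemma card_mod_img: "(i::nat) \<le> k \<Longrightarrow> card ((\<lambda>j. (s + j) mod k) ` {..<i}) = i"
  using card_image[OF inj_mod_shift, of i k s] by simp

lemma mod_img_sub: "0 < (k::nat) \<Longrightarrow> (\<lambda>j. (s + j) mod k) ` {..<i} \<subseteq> {..<k}"
  by (auto simp: mod_less_divisor)

lemma Kp_period:
  assumes "0 < length d"
  shows "Kp d s (length d) = prod_list d"
proof -
  have "(\<lambda>j. (s + j) mod length d) ` {..<length d} = {..<length d}"
    using card_mod_img[of "length d" "length d" s] mod_img_sub[OF assms, of s "length d"]
    by (simp add: card_subset_eq)
  then show ?thesis
    by (simp add: Kp_set prod.list_conv_set_nth atLeast0LessThan)
qed

lemma Kp_nk:
  assumes "0 < length d"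
  shows "Kp d s (n * length d + i) = prod_list d ^ n * Kp d s i"
proof (induction n)
  case 0 then show ?case by simp
next
  case (Suc n)
  have "Kp d s (Suc n * length d + i) = Kp d s (length d + (n * length d + i))"
    by (simp add: add.assoc)
  also have "\<dots> = prod_list d * Kp d (s + length d) (n * length d + i)"
    by (simp add: Kp_add Kp_period[OF assms])
  also have "\<dots> = prod_list d ^ Suc n * Kp d s i"
    by (simp add: Kp_shift_k Suc)
  finally show ?case .
qed

lemma Kp_lower:
  assumes "i \<le> length d" "0 < length d"
  shows "(\<Prod>j<i. sort d ! j) \<le> Kp d s i"
  using prod_subset_lower[OF mod_img_sub[OF assms(2), of s i]] card_mod_img[OF assms(1), of s]
  by (simp add: Kp_set[OF assms(1)])

lemma prod_sort_split:
  assumes "i \<le> length d"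
  shows "prod_list d = (\<Prod>j<length d - i. sort d ! j) * (\<Prod>j\<in>{length d - i..<length d}. sort d ! j)"
proof -
  have "prod_list d = prod_list (sort d)"
    by (metis mset_sort prod_mset_prod_list)
  also have "\<dots> = (\<Prod>j<length d. sort d ! j)"
    by (simp add: prod.list_conv_set_nth atLeast0LessThan)
  also have "{..<length d} = {..<length d - i} \<union> {length d - i..<length d}" by auto
  also have "prod (\<lambda>j. sort d ! j) \<dots> = (\<Prod>j<length d - i. sort d ! j) * (\<Prod>j\<in>{length d - i..<length d}. sort d ! j)"
    by (rule prod.union_disjoint) auto
  finally show ?thesis .
qed

lemma Kp_upper:
  assumes "i \<le> length d" "0 < length d" and pos: "\<forall>x\<in>set d. 0 < x"
  shows "Kp d s i \<le> (\<Prod>j\<in>{length d - i..<length d}. sort d ! j)"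
proof -
  let ?k = "length d"
  let ?S = "(\<lambda>j. (s + j) mod ?k) ` {..<i}"
  let ?C = "{..<?k} - ?S"
  have Ssub: "?S \<subseteq> {..<?k}" by (rule mod_img_sub[OF assms(2)])
  have cardC: "card ?C = ?k - i"
    using card_mod_img[OF assms(1), of s] Ssub by (simp add: card_Diff_subset finite_subset)
  have low: "(\<Prod>j<?k - i. sort d ! j) \<le> (\<Prod>j\<in>?C. d ! j)"
  proof -
    have "?C \<subseteq> {..<?k}" by blast
    from prod_subset_lower[OF this] show ?thesis unfolding cardC .
  qed
  have sd: "(\<Prod>j<?k. d ! j) = (\<Prod>j\<in>?C. d ! j) * (\<Prod>j\<in>?S. d ! j)"
    by (rule prod.subset_diff[OF Ssub]) simp
  have "(\<Prod>j\<in>?S. d ! j) * (\<Prod>j\<in>?C. d ! j) = (\<Prod>j<?k. d ! j)"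
    unfolding sd by (rule mult.commute)
  also have "\<dots> = prod_list d" by (simp add: prod.list_conv_set_nth atLeast0LessThan)
  also have "\<dots> = (\<Prod>j<?k - i. sort d ! j) * (\<Prod>j\<in>{?k - i..<?k}. sort d ! j)"
    by (rule prod_sort_split[OF assms(1)])
  finally have eq: "(\<Prod>j\<in>?S. d ! j) * (\<Prod>j\<in>?C. d ! j) = (\<Prod>j<?k - i. sort d ! j) * (\<Prod>j\<in>{?k - i..<?k}. sort d ! j)" .
  have "(\<Prod>j<?k - i. sort d ! j) > 0"
  proof -
    have "\<forall>j<?k - i. sort d ! j > 0"
    proof (intro allI impI)
      fix j assume "j < ?k - i"
      then have "j < length (sort d)" by simp
      then have "sort d ! j \<in> set (sort d)" by (rule nth_mem)
      then show "sort d ! j > 0" using pos by simp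
    qed
    then show ?thesis by (simp add: prod_pos)
  qed
  moreover have canc: "\<And>a b c e::nat. a * b = c * e \<Longrightarrow> c \<le> b \<Longrightarrow> 0 < c \<Longrightarrow> a \<le> e"
  proof -
    fix a b c e :: nat assume h: "a * b = c * e" "c \<le> b" "0 < c"
    have "c * a \<le> b * a" using h(2) by (rule mult_le_mono1)
    also have "b * a = c * e" using h(1) by (simp only: mult.commute)
    finally have "c * a \<le> c * e" .
    then show "a \<le> e" using h(3) by simp
  qed
  ultimately have "(\<Prod>j\<in>?S. d ! j) \<le> (\<Prod>j\<in>{?k - i..<?k}. sort d ! j)"
    using canc[OF eq low] by blast
  then show ?thesis by (simp add: Kp_set[OF assms(1)])
qed

lemma dsort_lower: "(\<Prod>j=1..i. real (dsort d j)) = (\<Prod>j<i. real (sort d ! j))"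
  using prod.atLeast1_atMost_eq[of "\<lambda>j. real (dsort d j)" i] by (simp add: dsort_def)

lemma dsort_upper:
  assumes "i \<le> length d"
  shows "(\<Prod>j=length d + 1 - i..length d. real (dsort d j)) = (\<Prod>j\<in>{length d - i..<length d}. real (sort d ! j))"
proof -
  have e: "length d + 1 - i = Suc (length d - i)" using assms by simp
  have "{length d + 1 - i..length d} = {Suc (length d - i)..<Suc (length d)}"
    by (simp only: e atLeastLessThanSuc_atLeastAtMost)
  then have "(\<Prod>j=length d + 1 - i..length d. real (dsort d j)) = (\<Prod>j\<in>{length d - i..<length d}. real (dsort d (Suc j)))"
    by (simp only: prod.shift_bounds_Suc_ivl)
  also have "\<dots> = (\<Prod>j\<in>{length d - i..<length d}. real (sort d ! j))"
    by (simp add: dsort_def)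
  finally show ?thesis .
qed

lemma sum_divmod:
  assumes "0 < (k::nat)" "i \<le> k"
  shows "(\<Sum>u<n*k+i. g (u div k) (u mod k)) = (\<Sum>m<n. \<Sum>j<k. g m j) + (\<Sum>j<i. (g n j :: real))"
  using assms(2)
proof (induction n arbitrary: i)
  case 0
  then show ?case
  proof (induction i)
    case 0 then show ?case by simp
  next
    case (Suc i)
    then show ?case using assms(1) by simp
  qed
next
  case (Suc n)
  show ?case using Suc.prems
  proof (induction i)
    case 0
    have "Suc n * k + 0 = n * k + k" by simp
    then have "(\<Sum>u<Suc n * k + 0. g (u div k) (u mod k)) = (\<Sum>u<n * k + k. g (u div k) (u mod k))"
      by (simp only:)
    also have "\<dots> = (\<Sum>m<n. \<Sum>j<k. g m j) + (\<Sum>j<k. g n j)"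
      using Suc.IH[of k] by simp
    finally show ?case by simp
  next
    case (Suc i)
    then have "i < k" by simp
    have k0: "k \<noteq> 0" using assms(1) by simp
    have m1: "(Suc n * k + i) mod k = i" by (simp only: mod_mult_self3 mod_less[OF \<open>i < k\<close>])
    have d1: "(Suc n * k + i) div k = Suc n"
      by (simp only: div_mult_self3[OF k0] div_less[OF \<open>i < k\<close>] add_0_right)
    have "(\<Sum>u<Suc n * k + Suc i. g (u div k) (u mod k)) = (\<Sum>u<Suc (Suc n * k + i). g (u div k) (u mod k))"
      by (simp only: add_Suc_right)
    also have "\<dots> = (\<Sum>u<Suc n * k + i. g (u div k) (u mod k)) + g ((Suc n * k + i) div k) ((Suc n * k + i) mod k)"
      by (rule sum.lessThan_Suc)
    also have "\<dots> = (\<Sum>u<Suc n * k + i. g (u div k) (u mod k)) + g (Suc n) i"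
      by (simp only: m1 d1)
    finally have "(\<Sum>u<Suc n * k + Suc i. g (u div k) (u mod k)) = (\<Sum>u<Suc n * k + i. g (u div k) (u mod k)) + g (Suc n) i" .
    then show ?case using Suc by simp
  qed
qed

lemma canc_real: "(g::real) \<noteq> 0 \<Longrightarrow> a / g * (b * g) = b * a"
  by (simp add: field_simps)

context
  fixes d :: "nat list"
  assumes kpos: "0 < length d" and d2: "\<forall>x\<in>set d. 2 \<le> x"
begin

lemma dpos: "\<forall>x\<in>set d. 0 < x" using d2 by auto

lemma Pd_pos: "0 < prod_list d"
proof -
  have "0 \<notin> set d" using dpos by auto
  then show ?thesis using prod_list_zero_iff[of d] by simp
qed

lemma sort_pos: "j < length d \<Longrightarrow> 0 < sort d ! j"
proof -
  assume "j < length d"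
  then have "j < length (sort d)" by simp
  then have "sort d ! j \<in> set (sort d)" by (rule nth_mem)
  then show "sort d ! j > 0" using dpos by simp
qed

lemma G_pos: "0 < Gm d"
  unfolding Gm_def using kpos Pd_pos by simp

lemma G_k: "Gm d ^ length d = real (prod_list d)"
  unfolding Gm_def using kpos by simp

lemma G_pow: "Gm d ^ r = real (prod_list d) ^ (r div length d) * Gm d ^ (r mod length d)"
proof -
  have "Gm d ^ r = Gm d ^ (length d * (r div length d) + r mod length d)"
    by (simp only: mult_div_mod_eq)
  also have "\<dots> = (Gm d ^ length d) ^ (r div length d) * Gm d ^ (r mod length d)"
    by (simp only: power_add power_mult)
  finally show ?thesis by (simp only: G_k)
qed

lemma cc_G: "cc d (r mod length d) * Gm d ^ r
   = real (prod_list d) ^ (r div length d) * (\<Prod>j<r mod length d. real (sort d ! j))"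
proof -
  have g: "Gm d ^ (r mod length d) \<noteq> 0" using G_pos by simp
  show ?thesis unfolding cc_def dsort_lower G_pow[of r] by (rule canc_real[OF g])
qed

lemma cbar_G: "cbar d (r mod length d) * Gm d ^ r
   = real (prod_list d) ^ (r div length d) * (\<Prod>j\<in>{length d - r mod length d..<length d}. real (sort d ! j))"
proof -
  have g: "Gm d ^ (r mod length d) \<noteq> 0" using G_pos by simp
  show ?thesis unfolding cbar_def dsort_upper[OF less_imp_le[OF mod_less_divisor[OF kpos]]] G_pow[of r]
    by (rule canc_real[OF g])
qed

lemma r_decomp: "r = (r div length d) * length d + r mod length d" by (simp only: div_mult_mod_eq)

lemma low_Kp: "real (prod_list d) ^ (r div length d) * (\<Prod>j<r mod length d. real (sort d ! j)) \<le> real (Kp d s r)"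
proof -
  have "Kp d s r = prod_list d ^ (r div length d) * Kp d s (r mod length d)"
    by (subst r_decomp) (rule Kp_nk[OF kpos])
  moreover have "(\<Prod>j<r mod length d. sort d ! j) \<le> Kp d s (r mod length d)"
    by (rule Kp_lower) (use kpos in \<open>simp_all add: less_imp_le\<close>)
  ultimately have "prod_list d ^ (r div length d) * (\<Prod>j<r mod length d. sort d ! j) \<le> Kp d s r"
    by simp
  then have "real (prod_list d ^ (r div length d) * (\<Prod>j<r mod length d. sort d ! j)) \<le> real (Kp d s r)"
    by (simp only: of_nat_le_iff)
  then show ?thesis by (simp only: of_nat_mult of_nat_power of_nat_prod)
qed

lemma up_Kp: "real (Kp d s r) \<le> real (prod_list d) ^ (r div length d) * (\<Prod>j\<in>{length d - r mod length d..<length d}. real (sort d ! j))"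
proof -
  have "Kp d s r = prod_list d ^ (r div length d) * Kp d s (r mod length d)"
    by (subst r_decomp) (rule Kp_nk[OF kpos])
  moreover have "Kp d s (r mod length d) \<le> (\<Prod>j\<in>{length d - r mod length d..<length d}. sort d ! j)"
    by (rule Kp_upper) (use kpos dpos in \<open>simp_all add: less_imp_le\<close>)
  ultimately have "Kp d s r \<le> prod_list d ^ (r div length d) * (\<Prod>j\<in>{length d - r mod length d..<length d}. sort d ! j)"
    by simp
  then have "real (Kp d s r) \<le> real (prod_list d ^ (r div length d) * (\<Prod>j\<in>{length d - r mod length d..<length d}. sort d ! j))"
    by (simp only: of_nat_le_iff)
  then show ?thesis by (simp only: of_nat_mult of_nat_power of_nat_prod)
qed

lemma I1: "cc d (r mod length d) * Gm d ^ r \<le> real (Kp d s r)"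
  using low_Kp cc_G by simp

lemma xx_eq: "xx d (u div length d) (u mod length d) = real (prod_list d) ^ (u div length d) * (\<Prod>j<u mod length d. real (sort d ! j))"
  unfolding xx_def dsort_lower by simp

lemma xx_pos: "0 < xx d (u div length d) (u mod length d)"
  unfolding xx_eq using Pd_pos sort_pos kpos
  by (intro mult_pos_pos prod_pos) (auto intro: order.strict_trans[OF _ mod_less_divisor])

lemma xx_le_Kp: "xx d (u div length d) (u mod length d) \<le> real (Kp d s u)"
  unfolding xx_eq by (rule low_Kp)

lemma hh_eq: "hh d (r mod length d) r = (\<Sum>u<r. 1 / xx d (u div length d) (u mod length d)) * Gm d ^ r"
proof -
  have N: "(r - r mod length d) div length d = r div length d"
    by (simp add: minus_mod_eq_mult_div)
  have "(\<Sum>u<r. 1 / xx d (u div length d) (u mod length d))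
     = (\<Sum>m<r div length d. \<Sum>j<length d. 1 / xx d m j) + (\<Sum>j<r mod length d. 1 / xx d (r div length d) j)"
    using sum_divmod[OF kpos, where i="r mod length d" and n="r div length d" and g="\<lambda>m j. 1 / xx d m j"] kpos
    by (simp add: less_imp_le)
  then show ?thesis unfolding hh_def Let_def N by simp
qed

lemma Ep_minus: "Ep d s r = 1 + (\<Sum>u<r. Kp d s (r - u))"
proof -
  have "Ep d s r = Kp d s 0 + (\<Sum>t<r. Kp d s (Suc t))"
    unfolding Ep_def by (rule sum.atMost_shift)
  also have "(\<Sum>t<r. Kp d s (Suc t)) = (\<Sum>u<r. Kp d s (Suc (r - Suc u)))"
    by (rule sum.nat_diff_reindex[symmetric])
  also have "\<dots> = (\<Sum>u<r. Kp d s (r - u))"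
    by (rule sum.cong) (auto simp: Suc_diff_Suc)
  finally show ?thesis by simp
qed

lemma I2: "real (Ep d s r) - 1 \<le> cbar d (r mod length d) * hh d (r mod length d) r"
proof -
  let ?C = "cbar d (r mod length d) * Gm d ^ r"
  have trm: "real (Kp d s (r - u)) \<le> ?C / xx d (u div length d) (u mod length d)" if "u < r" for u
  proof -
    have "Kp d s r = Kp d s (r - u) * Kp d (s + (r - u)) u"
      using Kp_add[of d s "r - u" u] that by simp
    hence eq: "real (Kp d s r) = real (Kp d s (r - u)) * real (Kp d (s + (r - u)) u)" by simp
    have x: "0 < xx d (u div length d) (u mod length d)" by (rule xx_pos)
    have "real (Kp d s (r - u)) * xx d (u div length d) (u mod length d)
         \<le> real (Kp d s (r - u)) * real (Kp d (s + (r - u)) u)"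
      by (intro mult_left_mono xx_le_Kp) simp
    also have "\<dots> = real (Kp d s r)" using eq by simp
    also have "\<dots> \<le> ?C" using up_Kp cbar_G by simp
    finally show ?thesis using x by (simp add: field_simps)
  qed
  have "real (Ep d s r) - 1 = (\<Sum>u<r. real (Kp d s (r - u)))"
    by (simp add: Ep_minus)
  also have "\<dots> \<le> (\<Sum>u<r. ?C / xx d (u div length d) (u mod length d))"
    by (rule sum_mono) (use trm in auto)
  also have "\<dots> = cbar d (r mod length d) * hh d (r mod length d) r"
    unfolding hh_eq by (simp add: sum_distrib_left sum_divide_distrib field_simps)
  finally show ?thesis .
qed

end

definition Dg :: "nat list \<Rightarrow> nat list \<Rightarrow> nat" where
  "Dg d w = d ! (length w mod length d)"

lemma ptree_snoc: "w @ [j] \<in> ptree d \<longleftrightarrow> w \<in> ptree d \<and> j < Dg d w"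
proof
  assume h: "w @ [j] \<in> ptree d"
  have "\<forall>i<length w. w ! i < d ! (i mod length d)"
  proof (intro allI impI)
    fix i assume "i < length w"
    then show "w ! i < d ! (i mod length d)"
      using h unfolding ptree_def by (auto simp: nth_append dest: spec[of _ i])
  qed
  moreover have "j < Dg d w"
    using h unfolding ptree_def Dg_def by (auto dest: spec[of _ "length w"])
  ultimately show "w \<in> ptree d \<and> j < Dg d w" unfolding ptree_def by simp
next
  assume h: "w \<in> ptree d \<and> j < Dg d w"
  show "w @ [j] \<in> ptree d" unfolding ptree_def
  proof (intro CollectI allI impI)
    fix i assume "i < length (w @ [j])"
    then have "i < length w \<or> i = length w" by auto
    then show "(w @ [j]) ! i < d ! (i mod length d)"
      using h unfolding ptree_def Dg_def by (auto simp: nth_append)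
  qed
qed

lemma ptree_Nil[simp]: "[] \<in> ptree d" by (simp add: ptree_def)

lemma ptree_prefix:
  assumes h: "w @ xs \<in> ptree d" shows "w \<in> ptree d"
  unfolding ptree_def
proof (intro CollectI allI impI)
  fix i assume "i < length w"
  then show "w ! i < d ! (i mod length d)"
    using h unfolding ptree_def by (auto simp: nth_append dest: spec[of _ i])
qed

fun reachp :: "(nat list \<Rightarrow> nat) \<Rightarrow> nat list \<Rightarrow> nat \<Rightarrow> nat list \<Rightarrow> bool" where
  "reachp Rv w a [] = True"
| "reachp Rv w a (x # xs) = (1 \<le> max a (Rv w) \<and> reachp Rv (w @ [x]) (max a (Rv w) - 1) xs)"

fun cred :: "(nat list \<Rightarrow> nat) \<Rightarrow> nat list \<Rightarrow> nat \<Rightarrow> nat list \<Rightarrow> nat" where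
  "cred Rv w a [] = a"
| "cred Rv w a (x # xs) = cred Rv (w @ [x]) (max a (Rv w) - 1) xs"

definition Reach :: "nat list \<Rightarrow> (nat list \<Rightarrow> nat) \<Rightarrow> nat list \<Rightarrow> nat \<Rightarrow> nat list set" where
  "Reach d Rv w a = {w @ xs | xs. w @ xs \<in> ptree d \<and> reachp Rv w a xs}"

lemma reachp_mono: "a \<le> a' \<Longrightarrow> reachp Rv w a xs \<Longrightarrow> reachp Rv w a' xs"
proof (induction xs arbitrary: w a a')
  case Nil then show ?case by simp
next
  case (Cons x xs)
  have le: "max a (Rv w) - 1 \<le> max a' (Rv w) - 1" using Cons.prems(1) by (auto simp: max_def)
  have "1 \<le> max a (Rv w)" "reachp Rv (w @ [x]) (max a (Rv w) - 1) xs" using Cons.prems(2) by auto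
  then have "1 \<le> max a' (Rv w)" "reachp Rv (w @ [x]) (max a' (Rv w) - 1) xs"
    using Cons.IH[OF le] Cons.prems(1) by (auto simp: max_def)
  then show ?case by simp
qed

lemma Reach_mono: "a \<le> a' \<Longrightarrow> Reach d Rv w a \<subseteq> Reach d Rv w a'"
  unfolding Reach_def using reachp_mono by blast

lemma reachp_append:
  "reachp Rv w a (xs @ ys) \<longleftrightarrow> reachp Rv w a xs \<and> reachp Rv (w @ xs) (cred Rv w a xs) ys"
  by (induction xs arbitrary: w a) auto

lemma reach_short: "length zs \<le> max a (Rv v) \<Longrightarrow> reachp Rv v a zs"
proof (induction zs arbitrary: v a)
  case Nil then show ?case by simp
next
  case (Cons z zs)
  then show ?case by (auto intro!: Cons.IH)
qed

lemma Reach_eq: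
  assumes "w \<in> ptree d"
  shows "Reach d Rv w a = insert w (if 1 \<le> max a (Rv w)
           then (\<Union>j\<in>{..<Dg d w}. Reach d Rv (w @ [j]) (max a (Rv w) - 1)) else {})"
proof (intro set_eqI iffI)
  fix v assume "v \<in> Reach d Rv w a"
  then obtain xs where v: "v = w @ xs" "w @ xs \<in> ptree d" "reachp Rv w a xs"
    unfolding Reach_def by blast
  show "v \<in> insert w (if 1 \<le> max a (Rv w)
           then (\<Union>j\<in>{..<Dg d w}. Reach d Rv (w @ [j]) (max a (Rv w) - 1)) else {})"
  proof (cases xs)
    case Nil then show ?thesis using v by simp
  next
    case (Cons x ys)
    have p: "(w @ [x]) @ ys \<in> ptree d" using v Cons by simp
    hence "w @ [x] \<in> ptree d" by (rule ptree_prefix)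
    hence x: "x < Dg d w" by (simp add: ptree_snoc)
    have r: "1 \<le> max a (Rv w)" "reachp Rv (w @ [x]) (max a (Rv w) - 1) ys" using v Cons by auto
    have "v \<in> Reach d Rv (w @ [x]) (max a (Rv w) - 1)"
      unfolding Reach_def using p r v Cons by auto
    then show ?thesis using r x by auto
  qed
next
  fix v assume h: "v \<in> insert w (if 1 \<le> max a (Rv w)
           then (\<Union>j\<in>{..<Dg d w}. Reach d Rv (w @ [j]) (max a (Rv w) - 1)) else {})"
  show "v \<in> Reach d Rv w a"
  proof (cases "v = w")
    case True then show ?thesis unfolding Reach_def using assms by (auto intro: exI[of _ "[]"])
  next
    case False
    with h obtain j where j: "1 \<le> max a (Rv w)" "j < Dg d w" "v \<in> Reach d Rv (w @ [j]) (max a (Rv w) - 1)"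
      by (auto split: if_splits)
    then obtain ys where ys: "v = (w @ [j]) @ ys" "(w @ [j]) @ ys \<in> ptree d" "reachp Rv (w @ [j]) (max a (Rv w) - 1) ys"
      unfolding Reach_def by blast
    then show ?thesis unfolding Reach_def using j
      by (auto intro!: exI[of _ "j # ys"])
  qed
qed

lemma Reach_len: "v \<in> Reach d Rv w a \<Longrightarrow> length w \<le> length v"
  unfolding Reach_def by auto

lemma Reach_child_notin: "w \<notin> Reach d Rv (w @ [j]) b"
  using Reach_len[of w d Rv "w @ [j]" b] by auto

lemma Reach_finite_children:
  assumes "w \<in> ptree d" "finite (Reach d Rv w a)" "1 \<le> max a (Rv w)" "j < Dg d w"
  shows "finite (Reach d Rv (w @ [j]) (max a (Rv w) - 1))"
    "card (Reach d Rv (w @ [j]) (max a (Rv w) - 1)) < card (Reach d Rv w a)"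
proof -
  have sub: "Reach d Rv (w @ [j]) (max a (Rv w) - 1) \<subseteq> Reach d Rv w a - {w}"
    using Reach_eq[OF assms(1), of Rv a] assms(3,4) Reach_child_notin[of w d Rv j] by auto
  show "finite (Reach d Rv (w @ [j]) (max a (Rv w) - 1))"
    using sub assms(2) finite_subset by blast
  have "w \<in> Reach d Rv w a" using Reach_eq[OF assms(1), of Rv a] by auto
  then have "card (Reach d Rv w a) > 0" using assms(2) card_gt_0_iff by blast
  then have "card (Reach d Rv w a - {w}) < card (Reach d Rv w a)"
    using assms(2) \<open>w \<in> Reach d Rv w a\<close> by simp
  moreover have "card (Reach d Rv (w @ [j]) (max a (Rv w) - 1)) \<le> card (Reach d Rv w a - {w})"
    using sub assms(2) by (simp add: card_mono)
  ultimately show "card (Reach d Rv (w @ [j]) (max a (Rv w) - 1)) < card (Reach d Rv w a)" by simp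
qed

lemma cone_I_sub: "u \<in> cone_I d Rv n \<Longrightarrow> cone_B d Rv u \<subseteq> cone_I d Rv (Suc n)"
  by auto

lemma cone_B_sub: "u \<in> cone_set d Rv \<Longrightarrow> cone_B d Rv u \<subseteq> cone_set d Rv"
  unfolding cone_set_def using cone_I_sub by blast

lemma cone_Nil: "[] \<in> cone_set d Rv"
  unfolding cone_set_def by (auto intro: exI[of _ 0])

lemma cone_sub_Reach: "cone_set d Rv \<subseteq> Reach d Rv [] 0"
proof -
  have "cone_I d Rv n \<subseteq> Reach d Rv [] 0" for n
  proof (induction n)
    case 0 then show ?case unfolding Reach_def by auto
  next
    case (Suc n)
    show ?case
    proof
      fix v assume "v \<in> cone_I d Rv (Suc n)"
      then obtain u where u: "u \<in> cone_I d Rv n" "v \<in> cone_B d Rv u" by auto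
      with Suc have "u \<in> Reach d Rv [] 0" by blast
      then have ur: "u \<in> ptree d" "reachp Rv [] 0 u" unfolding Reach_def by auto
      from u(2) obtain zs where zs: "v = u @ zs" "v \<in> ptree d" "length zs \<le> Rv u"
        unfolding cone_B_def by (auto simp: prefix_def)
      have "reachp Rv [] 0 (u @ zs)"
        using ur zs by (simp add: reachp_append reach_short)
      then show "v \<in> Reach d Rv [] 0" unfolding Reach_def using zs by auto
    qed
  qed
  then show ?thesis unfolding cone_set_def by blast
qed

lemma Reach_sub_cone_aux:
  "u \<in> cone_set d Rv \<Longrightarrow> (a = 0 \<or> (\<exists>u'. u' \<in> cone_set d Rv \<and> prefix u' u \<and> length u - length u' + a \<le> Rv u'))
   \<Longrightarrow> u @ xs \<in> ptree d \<Longrightarrow> reachp Rv u a xs \<Longrightarrow> u @ xs \<in> cone_set d Rv"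
proof (induction xs arbitrary: u a)
  case Nil then show ?case by simp
next
  case (Cons x xs)
  let ?m = "max a (Rv u)"
  have m1: "1 \<le> ?m" and rest: "reachp Rv (u @ [x]) (?m - 1) xs" using Cons.prems by auto
  have p1: "(u @ [x]) @ xs \<in> ptree d" using Cons.prems by simp
  hence u1: "u @ [x] \<in> ptree d" by (rule ptree_prefix)
  have inv: "u @ [x] \<in> cone_set d Rv \<and> (\<exists>u'. u' \<in> cone_set d Rv \<and> prefix u' (u @ [x]) \<and> length (u @ [x]) - length u' + (?m - 1) \<le> Rv u')"
  proof (cases "a \<le> Rv u")
    case True
    then have "?m = Rv u" by simp
    have "u @ [x] \<in> cone_B d Rv u" unfolding cone_B_def using u1 m1 \<open>?m = Rv u\<close> by auto
    then have "u @ [x] \<in> cone_set d Rv" using cone_B_sub[OF Cons.prems(1)] by blast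
    moreover have "prefix u (u @ [x]) \<and> length (u @ [x]) - length u + (?m - 1) \<le> Rv u"
      using m1 \<open>?m = Rv u\<close> by auto
    ultimately show ?thesis using Cons.prems(1) by blast
  next
    case False
    then have ma: "?m = a" "a \<noteq> 0" using m1 by auto
    then obtain u' where u': "u' \<in> cone_set d Rv" "prefix u' u" "length u - length u' + a \<le> Rv u'"
      using Cons.prems(2) by blast
    have lu: "length u' \<le> length u" using u'(2) by (rule prefix_length_le)
    have "u @ [x] \<in> cone_B d Rv u'" unfolding cone_B_def using u1 u' ma lu
      by (auto simp: prefix_def)
    then have "u @ [x] \<in> cone_set d Rv" using cone_B_sub[OF u'(1)] by blast
    moreover have "prefix u' (u @ [x]) \<and> length (u @ [x]) - length u' + (?m - 1) \<le> Rv u'"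
      using u' ma lu by (auto simp: prefix_def)
    ultimately show ?thesis using u'(1) by blast
  qed
  have "(u @ [x]) @ xs \<in> cone_set d Rv"
    using Cons.IH[of "u @ [x]" "?m - 1"] inv p1 rest by blast
  then show ?case by simp
qed

lemma cone_eq_Reach: "cone_set d Rv = Reach d Rv [] 0"
proof
  show "cone_set d Rv \<subseteq> Reach d Rv [] 0" by (rule cone_sub_Reach)
  show "Reach d Rv [] 0 \<subseteq> cone_set d Rv"
  proof
    fix v assume "v \<in> Reach d Rv [] 0"
    then have "[] @ v \<in> ptree d" "reachp Rv [] 0 v" unfolding Reach_def by auto
    from Reach_sub_cone_aux[OF cone_Nil _ this] show "v \<in> cone_set d Rv" by simp
  qed
qed

primrec Qa :: "nat list \<Rightarrow> (nat list \<Rightarrow> nat \<Rightarrow> bool) \<Rightarrow> (nat list \<Rightarrow> nat) \<Rightarrow> nat \<Rightarrow> nat list \<Rightarrow> bool" where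
  "Qa d prev Rv 0 w = (Rv w = 0 \<or> (\<forall>j<Dg d w. prev (w @ [j]) (Rv w - 1)))"
| "Qa d prev Rv (Suc a) w = (if Rv w \<le> Suc a then (\<forall>j<Dg d w. Qa d prev Rv a (w @ [j]))
                             else (\<forall>j<Dg d w. prev (w @ [j]) (Rv w - 1)))"

primrec Qn :: "nat list \<Rightarrow> (nat list \<Rightarrow> nat) \<Rightarrow> nat \<Rightarrow> nat list \<Rightarrow> nat \<Rightarrow> bool" where
  "Qn d Rv 0 = (\<lambda>w a. Qa d (\<lambda>_ _. False) Rv a w)"
| "Qn d Rv (Suc n) = (\<lambda>w a. Qa d (Qn d Rv n) Rv a w)"

primrec Fa :: "nat list \<Rightarrow> (nat list \<Rightarrow> nat \<Rightarrow> bool) \<Rightarrow> (nat list \<Rightarrow> nat) \<Rightarrow> nat \<Rightarrow> nat list \<Rightarrow> bool" where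
  "Fa d prev Rv 0 w = (Rv w = 0 \<or> (\<forall>j<Dg d w. prev (w @ [j]) (Rv w - 1)))"
| "Fa d prev Rv (Suc a) w = (\<forall>j<Dg d w. Fa d prev Rv a (w @ [j]))"

primrec Fn :: "nat list \<Rightarrow> (nat list \<Rightarrow> nat) \<Rightarrow> nat \<Rightarrow> nat list \<Rightarrow> nat \<Rightarrow> bool" where
  "Fn d Rv 0 = (\<lambda>w a. Fa d (\<lambda>_ _. False) Rv a w)"
| "Fn d Rv (Suc n) = (\<lambda>w a. Fa d (Fn d Rv n) Rv a w)"

definition prevQ :: "nat list \<Rightarrow> (nat list \<Rightarrow> nat) \<Rightarrow> nat \<Rightarrow> nat list \<Rightarrow> nat \<Rightarrow> bool" where
  "prevQ d Rv N = (case N of 0 \<Rightarrow> (\<lambda>_ _. False) | Suc N' \<Rightarrow> Qn d Rv N')"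

definition prevF :: "nat list \<Rightarrow> (nat list \<Rightarrow> nat) \<Rightarrow> nat \<Rightarrow> nat list \<Rightarrow> nat \<Rightarrow> bool" where
  "prevF d Rv N = (case N of 0 \<Rightarrow> (\<lambda>_ _. False) | Suc N' \<Rightarrow> Fn d Rv N')"

lemma Qn_Qa: "Qn d Rv N w a = Qa d (prevQ d Rv N) Rv a w"
  by (cases N) (simp_all add: prevQ_def)

lemma Fn_Fa: "Fn d Rv N w a = Fa d (prevF d Rv N) Rv a w"
  by (cases N) (simp_all add: prevF_def)

lemma Qn_eq: "Qn d Rv N w a = (if max a (Rv w) = 0 then True
    else if Rv w \<le> a then (\<forall>j<Dg d w. Qn d Rv N (w @ [j]) (a - 1))
    else (\<forall>j<Dg d w. prevQ d Rv N (w @ [j]) (Rv w - 1)))"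
  unfolding Qn_Qa by (cases a) auto

lemma Fn_eq: "Fn d Rv N w a = (if a = 0 then (Rv w = 0 \<or> (\<forall>j<Dg d w. prevF d Rv N (w @ [j]) (Rv w - 1)))
    else (\<forall>j<Dg d w. Fn d Rv N (w @ [j]) (a - 1)))"
  unfolding Fn_Fa by (cases a) auto

lemma Qa_mono: "(\<And>w a. P w a \<Longrightarrow> P' w a) \<Longrightarrow> Qa d P Rv a w \<Longrightarrow> Qa d P' Rv a w"
  by (induction a arbitrary: w) auto

lemma Fa_mono: "(\<And>w a. P w a \<Longrightarrow> P' w a) \<Longrightarrow> Fa d P Rv a w \<Longrightarrow> Fa d P' Rv a w"
  by (induction a arbitrary: w) auto

lemma Qn_Suc_mono: "Qn d Rv N w a \<Longrightarrow> Qn d Rv (Suc N) w a"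
proof (induction N arbitrary: w a)
  case 0
  have "Qa d (\<lambda>_ _. False) Rv a w" using 0 by simp
  then have "Qa d (Qn d Rv 0) Rv a w" by (rule Qa_mono[rotated]) simp
  then show ?case by simp
next
  case (Suc N)
  have "Qa d (Qn d Rv N) Rv a w" using Suc.prems by simp
  then have "Qa d (Qn d Rv (Suc N)) Rv a w" by (rule Qa_mono[OF Suc.IH, rotated])
  then show ?case by simp
qed

lemma Fn_Suc_mono: "Fn d Rv N w a \<Longrightarrow> Fn d Rv (Suc N) w a"
proof (induction N arbitrary: w a)
  case 0
  have "Fa d (\<lambda>_ _. False) Rv a w" using 0 by simp
  then have "Fa d (Fn d Rv 0) Rv a w" by (rule Fa_mono[rotated]) simp
  then show ?case by simp
next
  case (Suc N)
  have "Fa d (Fn d Rv N) Rv a w" using Suc.prems by simp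
  then have "Fa d (Fn d Rv (Suc N)) Rv a w" by (rule Fa_mono[OF Suc.IH, rotated])
  then show ?case by simp
qed

lemma Qn_mono: "N \<le> M \<Longrightarrow> Qn d Rv N w a \<Longrightarrow> Qn d Rv M w a"
  by (induction M rule: dec_induct) (blast intro: Qn_Suc_mono)+

lemma Fn_mono: "N \<le> M \<Longrightarrow> Fn d Rv N w a \<Longrightarrow> Fn d Rv M w a"
  by (induction M rule: dec_induct) (blast intro: Fn_Suc_mono)+

lemma Qn_finite:
  "w \<in> ptree d \<Longrightarrow> Qn d Rv N w a \<Longrightarrow> finite (Reach d Rv w a)"
proof (induction N arbitrary: w a)
  case (0 w a)
  then show ?case
  proof (induction a arbitrary: w)
    case 0
    then show ?case using Reach_eq[OF 0(1), of Rv 0] Qn_eq[of d Rv 0 w 0]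
      by (auto simp: prevQ_def split: if_splits)
  next
    case (Suc a)
    show ?case
    proof (cases "Rv w \<le> Suc a")
      case True
      then have "\<forall>j<Dg d w. Qn d Rv 0 (w @ [j]) a" using Suc.prems Qn_eq[of d Rv 0 w "Suc a"] by auto
      then have "\<forall>j<Dg d w. finite (Reach d Rv (w @ [j]) a)"
        using Suc.IH Suc.prems(1) by (auto simp: ptree_snoc)
      then show ?thesis using Reach_eq[OF Suc.prems(1), of Rv "Suc a"] True by auto
    next
      case False
      then have "\<forall>j<Dg d w. False" using Suc.prems Qn_eq[of d Rv 0 w "Suc a"] by (auto simp: prevQ_def)
      then show ?thesis using Reach_eq[OF Suc.prems(1), of Rv "Suc a"] by auto
    qed
  qed
next
  case (Suc N w a)
  then show ?case
  proof (induction a arbitrary: w)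
    case 0
    show ?case
    proof (cases "Rv w = 0")
      case True then show ?thesis using Reach_eq[OF 0(2), of Rv 0] by simp
    next
      case False
      then have "\<forall>j<Dg d w. Qn d Rv N (w @ [j]) (Rv w - 1)" using 0 Qn_eq[of d Rv "Suc N" w 0] by (auto simp: prevQ_def)
      then have "\<forall>j<Dg d w. finite (Reach d Rv (w @ [j]) (Rv w - 1))"
        using 0 by (auto simp: ptree_snoc)
      then show ?thesis using Reach_eq[OF 0(2), of Rv 0] by auto
    qed
  next
    case (Suc a)
    show ?case
    proof (cases "Rv w \<le> Suc a")
      case True
      then have "\<forall>j<Dg d w. Qn d Rv (Suc N) (w @ [j]) a" using Suc.prems Qn_eq[of d Rv "Suc N" w "Suc a"] by auto
      then have "\<forall>j<Dg d w. finite (Reach d Rv (w @ [j]) a)"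
        using Suc.IH Suc.prems by (auto simp: ptree_snoc)
      then show ?thesis using Reach_eq[OF Suc.prems(2), of Rv "Suc a"] True by auto
    next
      case False
      then have "\<forall>j<Dg d w. Qn d Rv N (w @ [j]) (Rv w - 1)" using Suc.prems Qn_eq[of d Rv "Suc N" w "Suc a"] by (auto simp: prevQ_def)
      then have "\<forall>j<Dg d w. finite (Reach d Rv (w @ [j]) (Rv w - 1))"
        using Suc.prems by (auto simp: ptree_snoc)
      then show ?thesis using Reach_eq[OF Suc.prems(2), of Rv "Suc a"] False by auto
    qed
  qed
qed

lemma choose_N:
  fixes P :: "nat \<Rightarrow> nat \<Rightarrow> bool"
  assumes "\<forall>j<D. \<exists>N. P N j" and mono: "\<And>N M j. N \<le> M \<Longrightarrow> P N j \<Longrightarrow> P M j"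
  shows "\<exists>N. \<forall>j<D. P N j"
proof -
  from assms(1) obtain f where f: "\<forall>j<D. P (f j) j" by metis
  have "\<forall>j<D. P (\<Sum>i<D. f i) j"
  proof (intro allI impI)
    fix j assume "j < D"
    have "f j \<le> (\<Sum>i<D. f i)" using \<open>j < D\<close> by (intro member_le_sum) auto
    then show "P (\<Sum>i<D. f i) j" using mono f \<open>j < D\<close> by blast
  qed
  then show ?thesis by blast
qed

lemma finite_Qn:
  "finite (Reach d Rv w a) \<Longrightarrow> w \<in> ptree d \<Longrightarrow> \<exists>N. Qn d Rv N w a"
proof (induction "card (Reach d Rv w a)" arbitrary: w a rule: less_induct)
  case less
  let ?m = "max a (Rv w)"
  show ?case
  proof (cases "?m = 0")
    case True
    have "Qn d Rv 0 w a" using True by (subst Qn_eq) simp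
    then show ?thesis by blast
  next
    case False
    then have m1: "1 \<le> ?m" by (simp add: max_def)
    have "\<forall>j<Dg d w. \<exists>N. Qn d Rv N (w @ [j]) (?m - 1)"
    proof (intro allI impI)
      fix j assume j: "j < Dg d w"
      note fc = Reach_finite_children[OF less.prems(2,1) m1 j]
      show "\<exists>N. Qn d Rv N (w @ [j]) (?m - 1)"
        using less.hyps[OF fc(2) fc(1)] less.prems(2) j by (simp add: ptree_snoc)
    qed
    then obtain N0 where N0: "\<forall>j<Dg d w. Qn d Rv N0 (w @ [j]) (?m - 1)"
      using choose_N[of "Dg d w" "\<lambda>N j. Qn d Rv N (w @ [j]) (?m - 1)"] Qn_mono by blast
    have "\<forall>j<Dg d w. Qn d Rv (Suc N0) (w @ [j]) (?m - 1)" using N0 Qn_Suc_mono by blast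
    then have "Qn d Rv (Suc N0) w a"
      using Qn_eq[of d Rv "Suc N0" w a] N0 False by (auto simp: prevQ_def max_def split: if_splits)
    then show ?thesis by blast
  qed
qed

lemma finite_Fn:
  "finite (Reach d Rv w a) \<Longrightarrow> w \<in> ptree d \<Longrightarrow> \<exists>N. Fn d Rv N w a"
proof (induction "card (Reach d Rv w a)" arbitrary: w a rule: less_induct)
  case less
  let ?m = "max a (Rv w)"
  show ?case
  proof (cases "?m = 0")
    case True
    have "Fn d Rv 0 w a" using True by (subst Fn_eq) simp
    then show ?thesis by blast
  next
    case False
    then have m1: "1 \<le> ?m" by (simp add: max_def)
    have sub: "Reach d Rv (w @ [j]) (a - 1) \<subseteq> Reach d Rv (w @ [j]) (?m - 1)" for j
      by (rule Reach_mono) simp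
    have "\<forall>j<Dg d w. \<exists>N. Fn d Rv N (w @ [j]) (?m - 1) \<and> Fn d Rv N (w @ [j]) (a - 1)"
    proof (intro allI impI)
      fix j assume j: "j < Dg d w"
      note fc = Reach_finite_children[OF less.prems(2,1) m1 j]
      have f2: "finite (Reach d Rv (w @ [j]) (a - 1))" using fc(1) sub finite_subset by blast
      have c2: "card (Reach d Rv (w @ [j]) (a - 1)) < card (Reach d Rv w a)"
        using fc sub card_mono[OF fc(1) sub[of j]] by linarith
      have wj: "w @ [j] \<in> ptree d" using less.prems(2) j by (simp add: ptree_snoc)
      obtain N1 where "Fn d Rv N1 (w @ [j]) (?m - 1)" using less.hyps[OF fc(2) fc(1) wj] by blast
      moreover obtain N2 where "Fn d Rv N2 (w @ [j]) (a - 1)" using less.hyps[OF c2 f2 wj] by blast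
      ultimately show "\<exists>N. Fn d Rv N (w @ [j]) (?m - 1) \<and> Fn d Rv N (w @ [j]) (a - 1)"
        by (meson Fn_mono le_add1 le_add2)
    qed
    then obtain N0 where N0: "\<forall>j<Dg d w. Fn d Rv N0 (w @ [j]) (?m - 1) \<and> Fn d Rv N0 (w @ [j]) (a - 1)"
      using choose_N[of "Dg d w" "\<lambda>N j. Fn d Rv N (w @ [j]) (?m - 1) \<and> Fn d Rv N (w @ [j]) (a - 1)"] Fn_mono by blast
    have "\<forall>j<Dg d w. Fn d Rv (Suc N0) (w @ [j]) (a - 1)" using N0 Fn_Suc_mono by blast
    then have "Fn d Rv (Suc N0) w a"
      using Fn_eq[of d Rv "Suc N0" w a] N0 False by (auto simp: prevF_def max_def split: if_splits)
    then show ?thesis by blast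
  qed
qed

lemma finite_cone_iff: "finite (cone_set d Rv) \<longleftrightarrow> (\<exists>N. Qn d Rv N [] 0)"
  unfolding cone_eq_Reach using finite_Qn Qn_finite ptree_Nil by blast

lemma finite_cone_Fn: "finite (cone_set d Rv) \<Longrightarrow> \<exists>N. Fn d Rv N [] 0"
  unfolding cone_eq_Reach using finite_Fn ptree_Nil by blast

locale cone_setup = prob_space M for M :: "'a measure" +
  fixes R :: "nat list \<Rightarrow> 'a \<Rightarrow> nat" and P :: "nat pmf" and d :: "nat list"
  assumes ind: "indep_vars (\<lambda>_. count_space UNIV) R (ptree d)"
    and dist: "\<forall>v\<in>ptree d. distr M (count_space UNIV) (R v) = measure_pmf P"
begin

definition ST :: "nat list \<Rightarrow> nat list set" where
  "ST w = {u \<in> ptree d. prefix w u}"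

definition Gen :: "nat list \<Rightarrow> 'a set set" where
  "Gen u = {R u -` A \<inter> space M | A. True}"

definition Sig :: "nat list set \<Rightarrow> 'a set set" where
  "Sig U = sigma_sets (space M) (\<Union>u\<in>U. Gen u)"

lemma rv: "v \<in> ptree d \<Longrightarrow> R v \<in> measurable M (count_space UNIV)"
  using ind unfolding indep_vars_def2 by auto

lemma Gen_events: "v \<in> ptree d \<Longrightarrow> Gen v \<subseteq> events"
  unfolding Gen_def using rv by (auto intro: measurable_sets)

lemma Gen_pow: "Gen v \<subseteq> Pow (space M)"
  unfolding Gen_def by auto

lemma Sig_sa: "sigma_algebra (space M) (Sig U)"
  unfolding Sig_def by (rule sigma_algebra_sigma_sets) (use Gen_pow in blast)

lemma Sig_events: "U \<subseteq> ptree d \<Longrightarrow> Sig U \<subseteq> events"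
  unfolding Sig_def by (rule sets.sigma_sets_subset) (use Gen_events in blast)

lemma Sig_mono: "U \<subseteq> V \<Longrightarrow> Sig U \<subseteq> Sig V"
  unfolding Sig_def by (rule sigma_sets_mono') blast

lemma Gen_Sig: "u \<in> U \<Longrightarrow> Gen u \<subseteq> Sig U"
  unfolding Sig_def by (auto intro: sigma_sets.Basic)

lemma point_Sig: "w \<in> U \<Longrightarrow> {\<omega> \<in> space M. R w \<omega> = r} \<in> Sig U"
proof -
  assume "w \<in> U"
  have "{\<omega> \<in> space M. R w \<omega> = r} = R w -` {r} \<inter> space M" by auto
  also have "\<dots> \<in> Gen w" unfolding Gen_def by blast
  finally show ?thesis using Gen_Sig[OF \<open>w \<in> U\<close>] by blast
qed

lemma ST_ptree: "ST w \<subseteq> ptree d" unfolding ST_def by auto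

lemma ST_self: "w \<in> ptree d \<Longrightarrow> w \<in> ST w" unfolding ST_def by auto

lemma ST_child: "ST (w @ [j]) \<subseteq> ST w - {w}"
  unfolding ST_def prefix_def by auto

lemma ST_child_disj: "i \<noteq> j \<Longrightarrow> ST (w @ [i]) \<inter> ST (w @ [j]) = {}"
  unfolding ST_def by (auto simp: prefix_def)

lemma conj_in:
  fixes D :: nat
  assumes "sigma_algebra \<Omega> S" "\<forall>j<D. E j \<in> S"
  shows "{\<omega> \<in> \<Omega>. \<forall>j<D. \<omega> \<in> E j} \<in> S"
proof -
  interpret S: sigma_algebra \<Omega> S by (rule assms(1))
  show ?thesis using assms(2)
  proof (induction D)
    case 0
    have "{\<omega> \<in> \<Omega>. \<forall>j<0. \<omega> \<in> E j} = \<Omega>" by auto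
    then show ?case using S.top by simp
  next
    case (Suc D)
    have "{\<omega> \<in> \<Omega>. \<forall>j<Suc D. \<omega> \<in> E j} = {\<omega> \<in> \<Omega>. \<forall>j<D. \<omega> \<in> E j} \<inter> E D"
      using S.sets_into_space Suc.prems by (auto simp: less_Suc_eq)
    then show ?case using Suc S.Int by simp
  qed
qed

lemma split_in:
  assumes "w \<in> U" "\<And>r. B r \<in> Sig U"
  shows "{\<omega> \<in> space M. \<omega> \<in> B (R w \<omega>)} \<in> Sig U"
proof -
  interpret S: sigma_algebra "space M" "Sig U" by (rule Sig_sa)
  have "{\<omega> \<in> space M. \<omega> \<in> B (R w \<omega>)} = (\<Union>r. {\<omega> \<in> space M. R w \<omega> = r} \<inter> B r)" by auto
  also have "\<dots> \<in> Sig U" using point_Sig[OF assms(1)] assms(2) by auto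
  finally show ?thesis .
qed

lemma Gen_Int_stable: "Int_stable (Gen u)"
  unfolding Int_stable_def
proof (intro ballI)
  fix X Y assume "X \<in> Gen u" "Y \<in> Gen u"
  then obtain A B where "X = R u -` A \<inter> space M" "Y = R u -` B \<inter> space M" unfolding Gen_def by blast
  then have "X \<inter> Y = R u -` (A \<inter> B) \<inter> space M" by auto
  then show "X \<inter> Y \<in> Gen u" unfolding Gen_def by blast
qed

lemma indep_children:
  assumes w: "w \<in> ptree d"
  shows "indep_sets (\<lambda>j. Sig (ST (w @ [j]))) {..<Dg d w}"
proof -
  have i1: "indep_sets Gen (ptree d)"
    using ind unfolding indep_vars_def2 Gen_def by simp
  have "indep_sets Gen (\<Union>j\<in>{..<Dg d w}. ST (w @ [j]))"
    by (rule indep_sets_mono_index[OF _ i1]) (use ST_ptree in blast)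
  moreover have "Int_stable (Gen u)" for u by (rule Gen_Int_stable)
  moreover have "disjoint_family_on (\<lambda>j. ST (w @ [j])) {..<Dg d w}"
    unfolding disjoint_family_on_def using ST_child_disj by blast
  ultimately show ?thesis unfolding Sig_def by (rule indep_sets_collect_sigma)
qed

lemma indep_point:
  assumes w: "w \<in> ptree d"
  shows "indep_sets (\<lambda>b. if b then Sig {w} else Sig (ST w - {w})) UNIV"
proof -
  have i1: "indep_sets Gen (ptree d)"
    using ind unfolding indep_vars_def2 Gen_def by simp
  have "indep_sets Gen (\<Union>b\<in>UNIV. if b then {w} else ST w - {w})"
    by (rule indep_sets_mono_index[OF _ i1]) (use ST_ptree w in auto)
  moreover have "Int_stable (Gen u)" for u by (rule Gen_Int_stable)
  moreover have "disjoint_family_on (\<lambda>b. if b then {w} else ST w - {w}) UNIV"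
    unfolding disjoint_family_on_def by auto
  ultimately have "indep_sets (\<lambda>b. sigma_sets (space M) (\<Union>u\<in>(if b then {w} else ST w - {w}). Gen u)) UNIV"
    by (rule indep_sets_collect_sigma)
  then show ?thesis unfolding Sig_def by (simp add: if_distrib)
qed

lemma pmf_R: "w \<in> ptree d \<Longrightarrow> prob {\<omega> \<in> space M. R w \<omega> = r} = pmf P r"
proof -
  assume w: "w \<in> ptree d"
  have "prob {\<omega> \<in> space M. R w \<omega> = r} = prob (R w -` {r} \<inter> space M)"
    by (rule arg_cong[where f=prob]) auto
  also have "\<dots> = measure (distr M (count_space UNIV) (R w)) {r}"
    by (rule measure_distr[symmetric]) (use rv[OF w] in auto)
  also have "\<dots> = pmf P r" using dist w by (simp add: measure_pmf_single)
  finally show ?thesis .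
qed

lemma prob_point_indep:
  assumes w: "w \<in> ptree d" and B: "B \<in> Sig (ST w - {w})"
  shows "prob ({\<omega> \<in> space M. R w \<omega> = r} \<inter> B) = pmf P r * prob B"
proof -
  let ?A = "\<lambda>b. if b then {\<omega> \<in> space M. R w \<omega> = r} else B"
  have "prob (\<Inter>b\<in>UNIV. ?A b) = (\<Prod>b\<in>UNIV. prob (?A b))"
    by (rule indep_setsD[OF indep_point[OF w]]) (use point_Sig[of w "{w}"] B in auto)
  moreover have "(\<Inter>b\<in>UNIV. ?A b) = {\<omega> \<in> space M. R w \<omega> = r} \<inter> B"
    by (auto simp: UNIV_bool)
  moreover have "(\<Prod>b\<in>UNIV. prob (?A b)) = prob {\<omega> \<in> space M. R w \<omega> = r} * prob B"
    by (simp add: UNIV_bool)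
  ultimately show ?thesis using pmf_R[OF w] by simp
qed

lemma Sig_sub_space: "X \<in> Sig U \<Longrightarrow> X \<subseteq> space M"
proof -
  interpret S: sigma_algebra "space M" "Sig U" by (rule Sig_sa)
  show "X \<in> Sig U \<Longrightarrow> X \<subseteq> space M" using S.sets_into_space by blast
qed

lemma children_conj:
  assumes w: "w \<in> ptree d" and E: "\<forall>j<Dg d w. E j \<in> Sig (ST (w @ [j]))"
  shows "{\<omega> \<in> space M. \<forall>j<Dg d w. \<omega> \<in> E j} \<in> Sig (ST w - {w})"
    "prob {\<omega> \<in> space M. \<forall>j<Dg d w. \<omega> \<in> E j} = (\<Prod>j<Dg d w. prob (E j))"
proof -
  have E': "\<forall>j<Dg d w. E j \<in> Sig (ST w - {w})"
    using E Sig_mono[OF ST_child] by blast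
  show "{\<omega> \<in> space M. \<forall>j<Dg d w. \<omega> \<in> E j} \<in> Sig (ST w - {w})"
    by (rule conj_in[OF Sig_sa E'])
  show "prob {\<omega> \<in> space M. \<forall>j<Dg d w. \<omega> \<in> E j} = (\<Prod>j<Dg d w. prob (E j))"
  proof (cases "Dg d w = 0")
    case True
    then show ?thesis by (simp add: prob_space)
  next
    case False
    have "{\<omega> \<in> space M. \<forall>j<Dg d w. \<omega> \<in> E j} = (\<Inter>j\<in>{..<Dg d w}. E j)"
      using False E Sig_sub_space by blast
    moreover have "prob (\<Inter>j\<in>{..<Dg d w}. E j) = (\<Prod>j<Dg d w. prob (E j))"
      by (rule indep_setsD[OF indep_children[OF w]]) (use False E in auto)
    ultimately show ?thesis by simp
  qed
qed

lemma split_sum: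
  assumes w: "w \<in> ptree d" and B: "\<And>r. B r \<in> Sig (ST w - {w})"
  shows "(\<lambda>r. pmf P r * prob (B r)) sums prob {\<omega> \<in> space M. \<omega> \<in> B (R w \<omega>)}"
proof -
  let ?C = "\<lambda>r. {\<omega> \<in> space M. R w \<omega> = r} \<inter> B r"
  have ev: "?C r \<in> events" for r
  proof -
    interpret S: sigma_algebra "space M" "Sig (ST w)" by (rule Sig_sa)
    have "?C r \<in> Sig (ST w)"
      using point_Sig[OF ST_self[OF w]] Sig_mono[of "ST w - {w}" "ST w"] B S.Int by blast
    then show ?thesis using Sig_events[OF ST_ptree] by blast
  qed
  have "(\<lambda>r. prob (?C r)) sums prob (\<Union>r. ?C r)"
    by (rule finite_measure_UNION) (use ev in \<open>auto simp: disjoint_family_on_def\<close>)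
  moreover have "(\<Union>r. ?C r) = {\<omega> \<in> space M. \<omega> \<in> B (R w \<omega>)}" by auto
  moreover have "prob (?C r) = pmf P r * prob (B r)" for r
    by (rule prob_point_indep[OF w B])
  ultimately show ?thesis by simp
qed

end

context cone_setup
begin

definition EvQ :: "nat \<Rightarrow> nat list \<Rightarrow> nat \<Rightarrow> 'a set" where
  "EvQ N w a = {\<omega> \<in> space M. Qn d (\<lambda>v. R v \<omega>) N w a}"

definition EvPQ :: "nat \<Rightarrow> nat list \<Rightarrow> nat \<Rightarrow> 'a set" where
  "EvPQ N w a = {\<omega> \<in> space M. prevQ d (\<lambda>v. R v \<omega>) N w a}"

definition EvF :: "nat \<Rightarrow> nat list \<Rightarrow> nat \<Rightarrow> 'a set" where
  "EvF N w a = {\<omega> \<in> space M. Fn d (\<lambda>v. R v \<omega>) N w a}"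

definition EvPF :: "nat \<Rightarrow> nat list \<Rightarrow> nat \<Rightarrow> 'a set" where
  "EvPF N w a = {\<omega> \<in> space M. prevF d (\<lambda>v. R v \<omega>) N w a}"

definition CJ :: "nat list \<Rightarrow> (nat list \<Rightarrow> 'a set) \<Rightarrow> 'a set" where
  "CJ w E = {\<omega> \<in> space M. \<forall>j<Dg d w. \<omega> \<in> E (w @ [j])}"

definition BQ :: "nat \<Rightarrow> nat list \<Rightarrow> nat \<Rightarrow> nat \<Rightarrow> 'a set" where
  "BQ N w a r = (if max a r = 0 then space M else if r \<le> a then CJ w (\<lambda>c. EvQ N c (a - 1))
      else CJ w (\<lambda>c. EvPQ N c (r - 1)))"

definition BF :: "nat \<Rightarrow> nat list \<Rightarrow> nat \<Rightarrow> 'a set" where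
  "BF N w r = (if r = 0 then space M else CJ w (\<lambda>c. EvPF N c (r - 1)))"

lemma EvPQ_0: "EvPQ 0 w a = {}" unfolding EvPQ_def prevQ_def by simp
lemma EvPQ_Suc: "EvPQ (Suc N) w a = EvQ N w a" unfolding EvPQ_def prevQ_def EvQ_def by simp
lemma EvPF_0: "EvPF 0 w a = {}" unfolding EvPF_def prevF_def by simp
lemma EvPF_Suc: "EvPF (Suc N) w a = EvF N w a" unfolding EvPF_def prevF_def EvF_def by simp

lemma EvQ_split: "EvQ N w a = {\<omega> \<in> space M. \<omega> \<in> BQ N w a (R w \<omega>)}"
  unfolding EvQ_def BQ_def CJ_def EvPQ_def
  by (subst Qn_eq) (auto simp: EvQ_def)

lemma EvF_split0: "EvF N w 0 = {\<omega> \<in> space M. \<omega> \<in> BF N w (R w \<omega>)}"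
  unfolding EvF_def BF_def CJ_def EvPF_def
  by (subst Fn_eq) auto

lemma EvF_Suc: "EvF N w (Suc b) = CJ w (\<lambda>c. EvF N c b)"
  unfolding EvF_def CJ_def by (subst Fn_eq) auto

lemma CJ_in:
  assumes "w \<in> ptree d" "\<forall>j<Dg d w. E (w @ [j]) \<in> Sig (ST (w @ [j]))"
  shows "CJ w E \<in> Sig (ST w - {w})" "prob (CJ w E) = (\<Prod>j<Dg d w. prob (E (w @ [j])))"
  unfolding CJ_def using children_conj[OF assms(1), of "\<lambda>j. E (w @ [j])"] assms(2) by auto

lemma space_Sig: "space M \<in> Sig U"
proof -
  interpret S: sigma_algebra "space M" "Sig U" by (rule Sig_sa)
  show ?thesis by (rule S.top)
qed

lemma empty_Sig: "{} \<in> Sig U"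
proof -
  interpret S: sigma_algebra "space M" "Sig U" by (rule Sig_sa)
  show ?thesis by (rule S.empty_sets)
qed

lemma meas_Q: "w \<in> ptree d \<Longrightarrow> EvQ N w a \<in> Sig (ST w)"
proof (induction N arbitrary: w a)
  case 0
  then show ?case
  proof (induction a arbitrary: w)
    case 0
    have "BQ 0 w 0 r \<in> Sig (ST w - {w})" for r
      unfolding BQ_def using CJ_in(1)[OF 0, of "\<lambda>c. EvPQ 0 c (r - 1)"] by (auto simp: EvPQ_0 empty_Sig space_Sig)
    then have "BQ 0 w 0 r \<in> Sig (ST w)" for r using Sig_mono[of "ST w - {w}" "ST w"] by blast
    then show ?case unfolding EvQ_split by (intro split_in ST_self 0)
  next
    case (Suc a)
    have ch: "\<forall>j<Dg d w. EvQ 0 (w @ [j]) a \<in> Sig (ST (w @ [j]))"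
      using Suc.IH Suc.prems by (simp add: ptree_snoc)
    have "BQ 0 w (Suc a) r \<in> Sig (ST w - {w})" for r
      unfolding BQ_def using CJ_in(1)[OF Suc.prems, of "\<lambda>c. EvPQ 0 c (r - 1)"] CJ_in(1)[OF Suc.prems, of "\<lambda>c. EvQ 0 c a"] ch
      by (auto simp: EvPQ_0 empty_Sig space_Sig)
    then have "BQ 0 w (Suc a) r \<in> Sig (ST w)" for r using Sig_mono[of "ST w - {w}" "ST w"] by blast
    then show ?case unfolding EvQ_split by (intro split_in ST_self Suc.prems)
  qed
next
  case (Suc N)
  have chN: "\<forall>j<Dg d w. EvPQ (Suc N) (w @ [j]) b \<in> Sig (ST (w @ [j]))" if "w \<in> ptree d" for w b
    using Suc.IH that by (simp add: ptree_snoc EvPQ_Suc)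
  show ?case using Suc.prems
  proof (induction a arbitrary: w)
    case 0
    have "BQ (Suc N) w 0 r \<in> Sig (ST w - {w})" for r
      unfolding BQ_def using CJ_in(1)[OF 0, of "\<lambda>c. EvPQ (Suc N) c (r - 1)"] chN[OF 0] by (auto simp: space_Sig)
    then have "BQ (Suc N) w 0 r \<in> Sig (ST w)" for r using Sig_mono[of "ST w - {w}" "ST w"] by blast
    then show ?case unfolding EvQ_split by (intro split_in ST_self 0)
  next
    case (Suc a)
    have ch: "\<forall>j<Dg d w. EvQ (Suc N) (w @ [j]) a \<in> Sig (ST (w @ [j]))"
      using Suc.IH Suc.prems by (simp add: ptree_snoc)
    have "BQ (Suc N) w (Suc a) r \<in> Sig (ST w - {w})" for r
      unfolding BQ_def using CJ_in(1)[OF Suc.prems, of "\<lambda>c. EvPQ (Suc N) c (r - 1)"] CJ_in(1)[OF Suc.prems, of "\<lambda>c. EvQ (Suc N) c a"] ch chN[OF Suc.prems]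
      by (auto simp: space_Sig)
    then have "BQ (Suc N) w (Suc a) r \<in> Sig (ST w)" for r using Sig_mono[of "ST w - {w}" "ST w"] by blast
    then show ?case unfolding EvQ_split by (intro split_in ST_self Suc.prems)
  qed
qed

lemma meas_F: "w \<in> ptree d \<Longrightarrow> EvF N w a \<in> Sig (ST w)"
proof (induction N arbitrary: w a)
  case (0 w a)
  then show ?case
  proof (induction a arbitrary: w)
    case 0
    have "BF 0 w r \<in> Sig (ST w - {w})" for r
      unfolding BF_def using CJ_in(1)[OF 0, of "\<lambda>c. EvPF 0 c (r - 1)"] by (auto simp: EvPF_0 empty_Sig space_Sig)
    then have "BF 0 w r \<in> Sig (ST w)" for r using Sig_mono[of "ST w - {w}" "ST w"] by blast
    then show ?case unfolding EvF_split0 by (intro split_in ST_self 0)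
  next
    case (Suc a)
    have ch: "\<forall>j<Dg d w. EvF 0 (w @ [j]) a \<in> Sig (ST (w @ [j]))"
      using Suc.IH Suc.prems by (simp add: ptree_snoc)
    show ?case unfolding EvF_Suc using CJ_in(1)[OF Suc.prems, of "\<lambda>c. EvF 0 c a"] ch
      Sig_mono[of "ST w - {w}" "ST w"] by auto
  qed
next
  case (Suc N w a)
  have chN: "\<forall>j<Dg d w. EvPF (Suc N) (w @ [j]) b \<in> Sig (ST (w @ [j]))" if "w \<in> ptree d" for w b
    using Suc.IH that by (simp add: ptree_snoc EvPF_Suc)
  show ?case using Suc.prems
  proof (induction a arbitrary: w)
    case 0
    have "BF (Suc N) w r \<in> Sig (ST w - {w})" for r
      unfolding BF_def using CJ_in(1)[OF 0, of "\<lambda>c. EvPF (Suc N) c (r - 1)"] chN[OF 0] by (auto simp: space_Sig)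
    then have "BF (Suc N) w r \<in> Sig (ST w)" for r using Sig_mono[of "ST w - {w}" "ST w"] by blast
    then show ?case unfolding EvF_split0 by (intro split_in ST_self 0)
  next
    case (Suc a)
    have ch: "\<forall>j<Dg d w. EvF (Suc N) (w @ [j]) a \<in> Sig (ST (w @ [j]))"
      using Suc.IH Suc.prems by (simp add: ptree_snoc)
    show ?case unfolding EvF_Suc using CJ_in(1)[OF Suc.prems, of "\<lambda>c. EvF (Suc N) c a"] ch
      Sig_mono[of "ST w - {w}" "ST w"] by auto
  qed
qed

lemma EvQ_events: "w \<in> ptree d \<Longrightarrow> EvQ N w a \<in> events"
  using meas_Q Sig_events[OF ST_ptree] by blast

lemma EvF_events: "w \<in> ptree d \<Longrightarrow> EvF N w a \<in> events"
  using meas_F Sig_events[OF ST_ptree] by blast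

end

locale cone_setup2 = cone_setup M R P d for M :: "'a measure" and R P d +
  assumes kpos: "0 < length d" and d2: "\<forall>x\<in>set d. 2 \<le> x"
begin

lemma Dg_pos: "0 < Dg d w"
  unfolding Dg_def using d2 kpos by (auto intro: order.strict_trans2[of 0 2] simp: nth_mem)

lemma CJ_empty: "CJ w (\<lambda>_. {}) = {}"
  unfolding CJ_def using Dg_pos by auto

lemma BQ_in: "w \<in> ptree d \<Longrightarrow> BQ N w a r \<in> Sig (ST w - {w})"
proof -
  assume w: "w \<in> ptree d"
  have c1: "\<forall>j<Dg d w. EvQ N (w @ [j]) b \<in> Sig (ST (w @ [j]))" for N b
    using meas_Q w by (simp add: ptree_snoc)
  have c2: "\<forall>j<Dg d w. EvPQ N (w @ [j]) b \<in> Sig (ST (w @ [j]))" for N b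
    using c1 by (cases N) (auto simp: EvPQ_0 EvPQ_Suc empty_Sig)
  show ?thesis unfolding BQ_def using CJ_in(1)[OF w] c1 c2 by (auto simp: space_Sig)
qed

lemma BF_in: "w \<in> ptree d \<Longrightarrow> BF N w r \<in> Sig (ST w - {w})"
proof -
  assume w: "w \<in> ptree d"
  have c1: "\<forall>j<Dg d w. EvF N (w @ [j]) b \<in> Sig (ST (w @ [j]))" for N b
    using meas_F w by (simp add: ptree_snoc)
  have c2: "\<forall>j<Dg d w. EvPF N (w @ [j]) b \<in> Sig (ST (w @ [j]))" for N b
    using c1 by (cases N) (auto simp: EvPF_0 EvPF_Suc empty_Sig)
  show ?thesis unfolding BF_def using CJ_in(1)[OF w] c1 c2 by (auto simp: space_Sig)
qed

lemma CJ_le: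
  assumes w: "w \<in> ptree d" and E: "\<forall>j<Dg d w. E (w @ [j]) \<in> Sig (ST (w @ [j])) \<and> prob (E (w @ [j])) \<le> x ^ K"
  shows "prob (CJ w E) \<le> x ^ (Dg d w * K)"
proof -
  have "prob (CJ w E) = (\<Prod>j<Dg d w. prob (E (w @ [j])))" using CJ_in(2)[OF w] E by blast
  also have "\<dots> \<le> (\<Prod>j<Dg d w. x ^ K)" by (rule prod_mono) (use E in auto)
  also have "\<dots> = x ^ (Dg d w * K)" by (simp add: power_mult mult.commute)
  finally show ?thesis .
qed

lemma CJ_ge:
  assumes w: "w \<in> ptree d" and x: "0 \<le> x" and E: "\<forall>j<Dg d w. E (w @ [j]) \<in> Sig (ST (w @ [j])) \<and> x ^ K \<le> prob (E (w @ [j]))"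
  shows "x ^ (Dg d w * K) \<le> prob (CJ w E)"
proof -
  have "x ^ (Dg d w * K) = (\<Prod>j<Dg d w. x ^ K)" by (simp add: power_mult mult.commute)
  also have "\<dots> \<le> (\<Prod>j<Dg d w. prob (E (w @ [j])))" by (rule prod_mono) (use E x in auto)
  also have "\<dots> = prob (CJ w E)" using CJ_in(2)[OF w] E by simp
  finally show ?thesis .
qed

lemma Dg_Kp: "Dg d w * Kp d (Suc (length w)) b = Kp d (length w) (Suc b)"
  by (simp add: Kp_Suc Dg_def)

lemma Dg_Ep: "Dg d w * Ep d (Suc (length w)) b = Ep d (length w) (Suc b) - 1"
  by (simp add: Ep_Suc Dg_def)

lemma Ep_ge1: "1 \<le> Ep d s r"
  unfolding Ep_def using member_le_sum[of 0 "{..r}" "Kp d s"] by simp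

context
  fixes \<rho> :: real
  assumes rho: "0 < \<rho>" "\<rho> \<le> 1"
    and rho_sums: "(\<lambda>r. pmf P r * (if r = 0 then 1 else \<rho> powr (cc d (r mod length d) * Gm d ^ r))) sums \<rho>"
begin

lemma F0:
  assumes w: "w \<in> ptree d"
    and Bb: "\<And>r. 1 \<le> r \<Longrightarrow> prob (BF N w r) \<le> \<rho> powr (cc d (r mod length d) * Gm d ^ r)"
  shows "prob (EvF N w 0) \<le> \<rho>"
proof -
  have s: "(\<lambda>r. pmf P r * prob (BF N w r)) sums prob (EvF N w 0)"
    unfolding EvF_split0 by (rule split_sum[OF w BF_in[OF w]])
  show ?thesis
  proof (rule sums_le[OF _ s rho_sums])
    fix r
    show "pmf P r * prob (BF N w r) \<le> pmf P r * (if r = 0 then 1 else \<rho> powr (cc d (r mod length d) * Gm d ^ r))"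
      using Bb[of r] by (intro mult_left_mono) (auto simp: BF_def)
  qed
qed

lemma rho_pow: "\<rho> ^ Kp d s r \<le> \<rho> powr (cc d (r mod length d) * Gm d ^ r)"
proof -
  have "\<rho> ^ Kp d s r = \<rho> powr real (Kp d s r)" using rho by (simp add: powr_realpow)
  also have "\<dots> \<le> \<rho> powr (cc d (r mod length d) * Gm d ^ r)"
    by (rule powr_mono') (use rho I1[OF kpos d2] in auto)
  finally show ?thesis .
qed

lemma F_bound: "w \<in> ptree d \<Longrightarrow> prob (EvF N w a) \<le> \<rho> ^ Kp d (length w) a"
proof (induction N arbitrary: w a)
  case (0 w a)
  then show ?case
  proof (induction a arbitrary: w)
    case 0
    have "prob (EvF 0 w 0) \<le> \<rho>"
    proof (rule F0[OF 0])
      fix r :: nat assume "1 \<le> r"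
      then have "BF 0 w r = {}" unfolding BF_def by (simp add: EvPF_0 CJ_empty)
      then show "prob (BF 0 w r) \<le> \<rho> powr (cc d (r mod length d) * Gm d ^ r)" by simp
    qed
    then show ?case by simp
  next
    case (Suc b)
    have "prob (CJ w (\<lambda>c. EvF 0 c b)) \<le> \<rho> ^ (Dg d w * Kp d (Suc (length w)) b)"
    proof (rule CJ_le[OF Suc.prems], intro allI impI)
      fix j assume j: "j < Dg d w"
      then have wj: "w @ [j] \<in> ptree d" using Suc.prems by (simp add: ptree_snoc)
      show "EvF 0 (w @ [j]) b \<in> Sig (ST (w @ [j])) \<and> prob (EvF 0 (w @ [j]) b) \<le> \<rho> ^ Kp d (Suc (length w)) b"
        using Suc.IH[OF wj] meas_F[OF wj] by simp
    qed
    then show ?case by (simp add: EvF_Suc Dg_Kp)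
  qed
next
  case (Suc N w a)
  show ?case using Suc.prems
  proof (induction a arbitrary: w)
    case 0
    have "prob (EvF (Suc N) w 0) \<le> \<rho>"
    proof (rule F0[OF 0])
      fix r :: nat assume "1 \<le> r"
      then have "BF (Suc N) w r = CJ w (\<lambda>c. EvF N c (r - 1))" unfolding BF_def by (simp add: EvPF_Suc)
      moreover have "prob (CJ w (\<lambda>c. EvF N c (r - 1))) \<le> \<rho> ^ (Dg d w * Kp d (Suc (length w)) (r - 1))"
    proof (rule CJ_le[OF 0], intro allI impI)
      fix j assume j: "j < Dg d w"
      then have wj: "w @ [j] \<in> ptree d" using 0 by (simp add: ptree_snoc)
      show "EvF N (w @ [j]) (r - 1) \<in> Sig (ST (w @ [j])) \<and> prob (EvF N (w @ [j]) (r - 1)) \<le> \<rho> ^ Kp d (Suc (length w)) (r - 1)"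
        using Suc.IH[OF wj] meas_F[OF wj] by simp
    qed
      moreover have "Dg d w * Kp d (Suc (length w)) (r - 1) = Kp d (length w) r"
        using Dg_Kp[of w "r - 1"] \<open>1 \<le> r\<close> by simp
      ultimately show "prob (BF (Suc N) w r) \<le> \<rho> powr (cc d (r mod length d) * Gm d ^ r)"
        using rho_pow[of "length w" r] by simp
    qed
    then show ?case by simp
  next
    case (Suc b)
    have "prob (CJ w (\<lambda>c. EvF (Suc N) c b)) \<le> \<rho> ^ (Dg d w * Kp d (Suc (length w)) b)"
    proof (rule CJ_le[OF Suc.prems], intro allI impI)
      fix j assume j: "j < Dg d w"
      then have wj: "w @ [j] \<in> ptree d" using Suc.prems by (simp add: ptree_snoc)
      show "EvF (Suc N) (w @ [j]) b \<in> Sig (ST (w @ [j])) \<and> prob (EvF (Suc N) (w @ [j]) b) \<le> \<rho> ^ Kp d (Suc (length w)) b"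
        using Suc.IH[OF wj] meas_F[OF wj] by simp
    qed
    then show ?case by (simp add: EvF_Suc Dg_Kp)
  qed
qed

end

end

context cone_setup2
begin

definition ee :: "nat \<Rightarrow> nat" where
  "ee r = nat \<lfloor>cbar d (r mod length d) * hh d (r mod length d) r\<rfloor>"

lemma Ep_ee: "Ep d s r - 1 \<le> ee r"
proof -
  have "real (Ep d s r - 1) \<le> cbar d (r mod length d) * hh d (r mod length d) r"
    using I2[OF kpos d2, of s r] Ep_ge1[of s r] by (simp add: of_nat_diff)
  then have "int (Ep d s r - 1) \<le> \<lfloor>cbar d (r mod length d) * hh d (r mod length d) r\<rfloor>"
    by (simp add: le_floor_iff)
  then show ?thesis unfolding ee_def by (simp add: le_nat_iff)
qed

context
  fixes f :: "real \<Rightarrow> real" and t :: "nat \<Rightarrow> real"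
  assumes f_sums: "\<And>x. 0 \<le> x \<Longrightarrow> x \<le> 1 \<Longrightarrow> (\<lambda>r. pmf P r * x ^ ee r) sums f x"
    and t0: "t 0 = 0" and tS: "\<And>n. t (Suc n) = f (t n)"
    and t01: "\<And>n. 0 \<le> t n" "\<And>n. t n \<le> 1"
begin

lemma prob_le1: "prob A \<le> 1" by (rule prob_le_1)

lemma Q_step:
  assumes w: "w \<in> ptree d"
    and Bb: "\<And>r. t (Suc N) ^ (Ep d (length w) a - 1) * t N ^ ee r \<le> prob (BQ (Suc N) w a r)"
  shows "t (Suc N) ^ Ep d (length w) a \<le> prob (EvQ (Suc N) w a)"
proof -
  let ?E = "Ep d (length w) a"
  have s: "(\<lambda>r. pmf P r * prob (BQ (Suc N) w a r)) sums prob (EvQ (Suc N) w a)"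
    unfolding EvQ_split by (rule split_sum[OF w BQ_in[OF w]])
  have s2: "(\<lambda>r. t (Suc N) ^ (?E - 1) * (pmf P r * t N ^ ee r)) sums (t (Suc N) ^ (?E - 1) * t (Suc N))"
    unfolding tS by (rule sums_mult[OF f_sums[OF t01]])
  have "t (Suc N) ^ ?E = t (Suc N) ^ (?E - 1) * t (Suc N)"
    using Ep_ge1[of "length w" a] by (metis Suc_diff_le diff_Suc_1 mult.commute power_Suc)
  also have "\<dots> \<le> prob (EvQ (Suc N) w a)"
  proof (rule sums_le[OF _ s2 s])
    fix r
    show "t (Suc N) ^ (?E - 1) * (pmf P r * t N ^ ee r) \<le> pmf P r * prob (BQ (Suc N) w a r)"
      using Bb[of r] by (simp add: mult_left_mono algebra_simps)
  qed
  finally show ?thesis .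
qed

lemma Q_bound: "w \<in> ptree d \<Longrightarrow> t N ^ Ep d (length w) a \<le> prob (EvQ N w a)"
proof (induction N arbitrary: w a)
  case (0 w a)
  have "Ep d (length w) a \<noteq> 0" using Ep_ge1[of "length w" a] by simp
  then have z: "t 0 ^ Ep d (length w) a = 0" using t0 by (simp add: power_0_left)
  show ?case unfolding z by (rule measure_nonneg)
next
  case (Suc N w a)
  note IHo = Suc.IH
  show ?case using Suc.prems
  proof (induction a arbitrary: w)
    case 0
    show ?case
    proof (rule Q_step[OF 0])
      fix r
      show "t (Suc N) ^ (Ep d (length w) 0 - 1) * t N ^ ee r \<le> prob (BQ (Suc N) w 0 r)"
      proof (cases "r = 0")
        case True
        then have "BQ (Suc N) w 0 r = space M" unfolding BQ_def by simp
        then show ?thesis using t01 by (simp add: power_le_one prob_space)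
      next
        case False
        then have B: "BQ (Suc N) w 0 r = CJ w (\<lambda>c. EvQ N c (r - 1))" unfolding BQ_def by (simp add: EvPQ_Suc)
        have "t N ^ (Dg d w * Ep d (Suc (length w)) (r - 1)) \<le> prob (CJ w (\<lambda>c. EvQ N c (r - 1)))"
        proof (rule CJ_ge[OF 0 t01(1)], intro allI impI)
          fix j assume j: "j < Dg d w"
          then have wj: "w @ [j] \<in> ptree d" using 0 by (simp add: ptree_snoc)
          show "EvQ N (w @ [j]) (r - 1) \<in> Sig (ST (w @ [j])) \<and> t N ^ Ep d (Suc (length w)) (r - 1) \<le> prob (EvQ N (w @ [j]) (r - 1))"
            using Suc.IH[OF wj] meas_Q[OF wj] by simp
        qed
        moreover have "Dg d w * Ep d (Suc (length w)) (r - 1) = Ep d (length w) r - 1"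
          using Dg_Ep[of w "r - 1"] False by simp
        moreover have "t N ^ ee r \<le> t N ^ (Ep d (length w) r - 1)"
          by (rule power_decreasing[OF Ep_ee t01])
        ultimately show ?thesis using B t01 by (simp add: mult_le_one power_le_one)
      qed
    qed
  next
    case (Suc b)
    show ?case
    proof (rule Q_step[OF Suc.prems])
      fix r
      show "t (Suc N) ^ (Ep d (length w) (Suc b) - 1) * t N ^ ee r \<le> prob (BQ (Suc N) w (Suc b) r)"
      proof (cases "r \<le> Suc b")
        case True
        then have B: "BQ (Suc N) w (Suc b) r = CJ w (\<lambda>c. EvQ (Suc N) c b)" unfolding BQ_def by simp
        have "t (Suc N) ^ (Dg d w * Ep d (Suc (length w)) b) \<le> prob (CJ w (\<lambda>c. EvQ (Suc N) c b))"
        proof (rule CJ_ge[OF Suc.prems t01(1)], intro allI impI)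
          fix j assume j: "j < Dg d w"
          then have wj: "w @ [j] \<in> ptree d" using Suc.prems by (simp add: ptree_snoc)
          show "EvQ (Suc N) (w @ [j]) b \<in> Sig (ST (w @ [j])) \<and> t (Suc N) ^ Ep d (Suc (length w)) b \<le> prob (EvQ (Suc N) (w @ [j]) b)"
            using Suc.IH[OF wj] meas_Q[OF wj] by simp
        qed
        then have "t (Suc N) ^ (Ep d (length w) (Suc b) - 1) \<le> prob (BQ (Suc N) w (Suc b) r)"
          using B Dg_Ep[of w b] by simp
        moreover have "t N ^ ee r \<le> 1" using t01 by (simp add: power_le_one)
        moreover have "0 \<le> t (Suc N) ^ (Ep d (length w) (Suc b) - 1)" using t01 by simp
        ultimately show ?thesis by (metis mult_right_le_one_le order.trans zero_le_power t01(1))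
      next
        case False
        then have B: "BQ (Suc N) w (Suc b) r = CJ w (\<lambda>c. EvQ N c (r - 1))" unfolding BQ_def by (simp add: EvPQ_Suc)
        have "t N ^ (Dg d w * Ep d (Suc (length w)) (r - 1)) \<le> prob (CJ w (\<lambda>c. EvQ N c (r - 1)))"
        proof (rule CJ_ge[OF Suc.prems t01(1)], intro allI impI)
          fix j assume j: "j < Dg d w"
          then have wj: "w @ [j] \<in> ptree d" using Suc.prems by (simp add: ptree_snoc)
          show "EvQ N (w @ [j]) (r - 1) \<in> Sig (ST (w @ [j])) \<and> t N ^ Ep d (Suc (length w)) (r - 1) \<le> prob (EvQ N (w @ [j]) (r - 1))"
            using IHo[OF wj] meas_Q[OF wj] by simp
        qed
        moreover have "Dg d w * Ep d (Suc (length w)) (r - 1) = Ep d (length w) r - 1"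
          using Dg_Ep[of w "r - 1"] False by simp
        moreover have "t N ^ ee r \<le> t N ^ (Ep d (length w) r - 1)"
          by (rule power_decreasing[OF Ep_ee t01])
        moreover have "t (Suc N) ^ (Ep d (length w) (Suc b) - 1) * t N ^ ee r \<le> t N ^ ee r"
          by (rule mult_left_le_one_le) (use t01 in \<open>simp_all add: power_le_one\<close>)
        ultimately show ?thesis using B by simp
      qed
    qed
  qed
qed

end
end

lemma exp_sums:
  fixes P :: "nat pmf" and g :: "nat \<Rightarrow> real"
  assumes "\<And>r. \<bar>g r\<bar> \<le> B"
  shows "(\<lambda>r. pmf P r * g r) sums measure_pmf.expectation P g"
proof -
  have int: "integrable (measure_pmf P) g"
    by (rule measure_pmf.integrable_const_bound[where B=B]) (use assms in auto)
  have "measure_pmf.expectation P g = integral\<^sup>L (count_space UNIV) (\<lambda>r. pmf P r *\<^sub>R g r)"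
    by (simp add: measure_pmf_eq_density integral_density)
  moreover have "integrable (count_space UNIV) (\<lambda>r. pmf P r *\<^sub>R g r)"
    using int by (simp add: measure_pmf_eq_density integrable_density)
  ultimately show ?thesis using sums_integral_count_space_nat[of "\<lambda>r. pmf P r *\<^sub>R g r"] by simp
qed

lemma collapse:
  fixes P :: "nat pmf" and F :: "nat \<Rightarrow> nat \<Rightarrow> real"
  assumes k: "0 < length d" and bd: "\<And>i r. \<bar>F i r\<bar> \<le> B"
  shows "(\<Sum>i<length d. measure_pmf.expectation P (\<lambda>r. F i r * indI d i r))
       = measure_pmf.expectation P (\<lambda>r. F (r mod length d) r)"
proof -
  have int: "integrable (measure_pmf P) (\<lambda>r. F i r * indI d i r)" for i
  proof (rule measure_pmf.integrable_const_bound[where B=B])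
    have "norm (F i x * indI d i x) \<le> B" for x
    proof (cases "x mod length d = i")
      case True then show ?thesis using bd[of i x] by (simp add: indI_def)
    next
      case False then show ?thesis using bd[of i x] by (simp add: indI_def)
    qed
    then show "AE x in measure_pmf P. norm (F i x * indI d i x) \<le> B" by simp
  qed simp
  have "(\<Sum>i<length d. measure_pmf.expectation P (\<lambda>r. F i r * indI d i r))
      = measure_pmf.expectation P (\<lambda>r. \<Sum>i<length d. F i r * indI d i r)"
    using Bochner_Integration.integral_sum[of "{..<length d}" "measure_pmf P" "\<lambda>i r. F i r * indI d i r"] int by simp
  also have "(\<lambda>r. \<Sum>i<length d. F i r * indI d i r) = (\<lambda>r. F (r mod length d) r)"
  proof
    fix r
    have "(\<Sum>i<length d. F i r * indI d i r) = (\<Sum>i<length d. if i = r mod length d then F i r else 0)"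
      by (rule sum.cong) (auto simp: indI_def)
    also have "\<dots> = F (r mod length d) r" using k by simp
    finally show "(\<Sum>i<length d. F i r * indI d i r) = F (r mod length d) r" .
  qed
  finally show ?thesis .
qed

context cone_setup2
begin

definition Fin :: "'a set" where
  "Fin = {\<omega> \<in> space M. finite (cone_set d (\<lambda>v. R v \<omega>))}"

lemma Fin_eq: "Fin = (\<Union>N. EvQ N [] 0)"
  unfolding Fin_def EvQ_def using finite_cone_iff by blast

lemma Fin_events: "Fin \<in> events"
  unfolding Fin_eq using EvQ_events[OF ptree_Nil] by blast

lemma Fin_sub_F: "Fin \<subseteq> (\<Union>N. EvF N [] 0)"
  unfolding Fin_def EvF_def using finite_cone_Fn by blast

lemma Fin_upper:
  fixes \<rho> :: real
  assumes rho: "0 < \<rho>" "\<rho> \<le> 1"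
    and rho_sums: "(\<lambda>r. pmf P r * (if r = 0 then 1 else \<rho> powr (cc d (r mod length d) * Gm d ^ r))) sums \<rho>"
  shows "prob Fin \<le> \<rho>"
proof -
  have b: "prob (EvF N [] 0) \<le> \<rho>" for N
    using F_bound[OF rho rho_sums ptree_Nil, of N 0] by simp
  have inc: "incseq (\<lambda>N. EvF N [] 0)"
  proof (rule incseq_SucI)
    fix N
    show "EvF N [] 0 \<subseteq> EvF (Suc N) [] 0"
    proof
      fix x assume "x \<in> EvF N [] 0"
      then have "x \<in> space M" "Fn d (\<lambda>v. R v x) N [] 0" unfolding EvF_def by auto
      moreover from this(2) have "Fn d (\<lambda>v. R v x) (Suc N) [] 0" by (rule Fn_Suc_mono)
      ultimately show "x \<in> EvF (Suc N) [] 0" unfolding EvF_def by blast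
    qed
  qed
  have lim: "(\<lambda>N. prob (EvF N [] 0)) \<longlonglongrightarrow> prob (\<Union>N. EvF N [] 0)"
    by (rule finite_Lim_measure_incseq[OF _ inc]) (use EvF_events[OF ptree_Nil] in blast)
  have "prob (\<Union>N. EvF N [] 0) \<le> \<rho>"
    by (rule LIMSEQ_le_const2[OF lim]) (use b in blast)
  moreover have "prob Fin \<le> prob (\<Union>N. EvF N [] 0)"
    by (rule finite_measure_mono[OF Fin_sub_F]) (use EvF_events[OF ptree_Nil] in blast)
  ultimately show ?thesis by simp
qed

lemma Fin_lower:
  fixes f :: "real \<Rightarrow> real" and \<psi> L :: real
  assumes f_sums: "\<And>x. 0 \<le> x \<Longrightarrow> x \<le> 1 \<Longrightarrow> (\<lambda>r. pmf P r * x ^ ee r) sums f x"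
    and lim: "(\<lambda>n. (f ^^ n) 0) \<longlonglongrightarrow> L"
    and t01: "\<And>n. 0 \<le> (f ^^ n) 0" "\<And>n. (f ^^ n) 0 \<le> 1"
  shows "L \<le> prob Fin"
proof -
  let ?t = "\<lambda>n. (f ^^ n) 0"
  have "?t N ^ Ep d (length ([]::nat list)) 0 \<le> prob (EvQ N [] 0)" for N
    by (rule Q_bound[where f=f and t="?t"]) (use f_sums t01 in auto)
  then have "?t N \<le> prob (EvQ N [] 0)" for N by simp
  moreover have "prob (EvQ N [] 0) \<le> prob Fin" for N
    by (rule finite_measure_mono) (use Fin_eq Fin_events in auto)
  ultimately have "?t N \<le> prob Fin" for N using order.trans by blast
  then show ?thesis by (intro LIMSEQ_le_const2[OF lim]) auto
qed

end

theorem theorem3: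
  fixes M :: "'a measure" and R :: "nat list \<Rightarrow> 'a \<Rightarrow> nat"
    and P :: "nat pmf" and d :: "nat list" and \<rho> \<psi> :: real
  assumes "prob_space M"
    and "length d \<ge> 1" and "\<forall>x\<in>set d. x \<ge> 2"
    and "0 < pmf P 0" and "pmf P 0 < 1"
    and "prob_space.indep_vars M (\<lambda>_. count_space UNIV) R (ptree d)"
    and "\<forall>v\<in>ptree d. distr M (count_space UNIV) (R v) = measure_pmf P"
    and "\<rho> \<ge> 0"
    and "(\<Sum>i<length d. measure_pmf.expectation P
            (\<lambda>r. \<rho> powr (cc d i * Gm d ^ r) * indI d i r)) + (1 - \<rho>) * pmf P 0 = \<rho>"
    and "\<forall>x\<ge>0. (\<Sum>i<length d. measure_pmf.expectation P
            (\<lambda>r. x powr (cc d i * Gm d ^ r) * indI d i r)) + (1 - x) * pmf P 0 = x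
            \<longrightarrow> \<rho> \<le> x"
    and "\<psi> \<ge> 0"
    and "(\<Sum>i<length d. measure_pmf.expectation P
            (\<lambda>r. \<psi> ^ nat \<lfloor>cbar d i * hh d i r\<rfloor> * indI d i r)) = \<psi>"
    and "\<forall>x\<ge>0. (\<Sum>i<length d. measure_pmf.expectation P
            (\<lambda>r. x ^ nat \<lfloor>cbar d i * hh d i r\<rfloor> * indI d i r)) = x
            \<longrightarrow> \<psi> \<le> x"
  shows "1 - \<rho> \<le> measure M {\<omega>\<in>space M. infinite (cone_set d (\<lambda>v. R v \<omega>))}
       \<and> measure M {\<omega>\<in>space M. infinite (cone_set d (\<lambda>v. R v \<omega>))} \<le> 1 - \<psi>"
proof -
  have kpos: "0 < length d" using assms(2) by linarith
  interpret cone_setup2 M R P d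
    by (intro cone_setup2.intro cone_setup.intro cone_setup_axioms.intro cone_setup2_axioms.intro)
       (use assms kpos in auto)
  let ?k = "length d"
  let ?E = "measure_pmf.expectation P"
  have E1: "?E (\<lambda>r. 1::real) = 1" by simp
  have G0: "0 \<le> Gm d" using G_pos[OF kpos assms(3)] by simp
  have cc0: "0 \<le> cc d i" for i unfolding cc_def using G0 by (intro divide_nonneg_nonneg prod_nonneg) auto

  have c1: "(\<Sum>i<?k. ?E (\<lambda>r. 1 powr (cc d i * Gm d ^ r) * indI d i r)) = 1"
    using collapse[OF kpos, of "\<lambda>i r. 1 powr (cc d i * Gm d ^ r)" 1 P] by simp
  have rho1: "\<rho> \<le> 1" using assms(10) c1 by auto
  let ?phi = "\<lambda>r. \<rho> powr (cc d (r mod ?k) * Gm d ^ r)"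
  have phib: "\<bar>\<rho> powr (cc d i * Gm d ^ r)\<bar> \<le> 1" for i r
    using powr_le1[of "cc d i * Gm d ^ r" \<rho>] cc0[of i] G0 assms(8) rho1 by simp
  have eqr: "?E ?phi + (1 - \<rho>) * pmf P 0 = \<rho>"
    using assms(9) collapse[OF kpos, of "\<lambda>i r. \<rho> powr (cc d i * Gm d ^ r)" 1 P] phib by simp
  have rho0: "0 < \<rho>"
  proof (rule ccontr)
    assume "\<not> 0 < \<rho>"
    then have "\<rho> = 0" using assms(8) by simp
    then have "?E ?phi = 0" by simp
    then show False using eqr assms(4) \<open>\<rho> = 0\<close> by simp
  qed
  have s1: "(\<lambda>r. pmf P r * ?phi r) sums ?E ?phi" by (rule exp_sums) (use phib in auto)
  have s2: "(\<lambda>r. if r = 0 then pmf P r * (1 - \<rho>) else 0) sums (pmf P 0 * (1 - \<rho>))"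
    by (rule sums_single)
  have "(\<lambda>r. pmf P r * ?phi r + (if r = 0 then pmf P r * (1 - \<rho>) else 0)) sums (?E ?phi + pmf P 0 * (1 - \<rho>))"
    by (rule sums_add[OF s1 s2])
  moreover have "?phi 0 = \<rho>" using rho0 by (simp add: cc_def)
  ultimately have "(\<lambda>r. pmf P r * (if r = 0 then 1 else ?phi r)) sums \<rho>"
    using eqr by (simp add: if_distrib algebra_simps cong: if_cong)
  then have Fu: "prob Fin \<le> \<rho>" by (rule Fin_upper[OF rho0 rho1])

  define f where "f x = ?E (\<lambda>r. x ^ ee r)" for x :: real
  have powb: "0 \<le> x \<Longrightarrow> x \<le> 1 \<Longrightarrow> \<bar>x ^ n\<bar> \<le> 1" for x :: real and n
    by (simp add: power_le_one)
  have fx: "(\<Sum>i<?k. ?E (\<lambda>r. x ^ nat \<lfloor>cbar d i * hh d i r\<rfloor> * indI d i r)) = f x"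
    if "0 \<le> x" "x \<le> 1" for x
    using collapse[OF kpos, of "\<lambda>i r. x ^ nat \<lfloor>cbar d i * hh d i r\<rfloor>" 1 P] powb[OF that]
    unfolding f_def ee_def by simp
  have f1: "f 1 = 1" unfolding f_def by simp
  have psi1: "\<psi> \<le> 1" using assms(13) fx[of 1] f1 by simp
  have f_sums: "(\<lambda>r. pmf P r * x ^ ee r) sums f x" if "0 \<le> x" "x \<le> 1" for x
    unfolding f_def by (rule exp_sums) (use powb[OF that] in auto)
  have one_sums: "(\<lambda>r. pmf P r * 1) sums 1" using exp_sums[of "\<lambda>_. 1" 1 P] by simp
  have f01: "0 \<le> f x" "f x \<le> 1" if "0 \<le> x" "x \<le> 1" for x
  proof -
    show "0 \<le> f x" by (rule sums_le[OF _ sums_zero f_sums[OF that]]) (use that in simp)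
    show "f x \<le> 1" by (rule sums_le[OF _ f_sums[OF that] one_sums])
        (use that in \<open>auto intro!: mult_right_le_one_le simp: power_le_one\<close>)
  qed
  have fmono: "f x \<le> f y" if xy: "0 \<le> x" "x \<le> y" "y \<le> 1" for x y
  proof -
    have x1: "x \<le> 1" using xy by linarith
    have y0: "0 \<le> y" using xy by linarith
    show ?thesis
    proof (rule sums_le[OF _ f_sums[OF xy(1) x1] f_sums[OF y0 xy(3)]])
      fix r
      show "pmf P r * x ^ ee r \<le> pmf P r * y ^ ee r"
        by (rule mult_left_mono[OF power_mono[OF xy(2) xy(1)] pmf_nonneg])
    qed
  qed
  define t where "t n = (f ^^ n) 0" for n
  have tS: "t (Suc n) = f (t n)" for n unfolding t_def by simp
  have t01: "0 \<le> t n \<and> t n \<le> 1" for n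
  proof (induction n)
    case 0 then show ?case by (simp add: t_def)
  next
    case (Suc n)
    then have "0 \<le> f (t n)" "f (t n) \<le> 1" using f01 by blast+
    then show ?case unfolding tS by simp
  qed
  have tinc: "t n \<le> t (Suc n)" for n
  proof (induction n)
    case 0 then show ?case using t01[of 1] by (simp add: t_def)
  next
    case (Suc n)
    have "f (t n) \<le> f (t (Suc n))"
      by (rule fmono) (use t01[of n] t01[of "Suc n"] Suc.IH in auto)
    then show ?case unfolding tS[of "Suc n"] tS[of n] .
  qed
  obtain L where lim: "t \<longlonglongrightarrow> L" and tL: "\<forall>i. t i \<le> L"
    using incseq_convergent[of t 1] tinc t01 by (auto simp: incseq_Suc_iff)
  have L0: "0 \<le> L" using tL t01 order.trans by blast
  have L1: "L \<le> 1" by (rule LIMSEQ_le_const2[OF lim]) (use t01 in auto)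
  have "(\<lambda>n. f (t n)) \<longlonglongrightarrow> f L"
    unfolding f_def
  proof (rule integral_dominated_convergence[where w="\<lambda>_. 1"])
    show "AE x in measure_pmf P. (\<lambda>i. t i ^ ee x) \<longlonglongrightarrow> L ^ ee x"
      using lim by (auto intro: tendsto_power)
    show "AE x in measure_pmf P. norm (t i ^ ee x) \<le> 1" for i
      using t01[of i] by (auto simp: power_le_one)
  qed simp_all
  moreover have "(\<lambda>n. f (t n)) \<longlonglongrightarrow> L"
    unfolding tS[symmetric] by (rule LIMSEQ_Suc[OF lim])
  ultimately have fL: "f L = L" by (rule LIMSEQ_unique)
  have psiL: "\<psi> \<le> L" using assms(13) fx[OF L0 L1] fL L0 by simp
  have Fl: "L \<le> prob Fin"
  proof -
    have tfun: "(\<lambda>n. (f ^^ n) 0) = t" by (rule ext) (simp add: t_def)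
    have lim': "(\<lambda>n. (f ^^ n) 0) \<longlonglongrightarrow> L" unfolding tfun by (rule lim)
    have a: "0 \<le> (f ^^ n) 0" "(f ^^ n) 0 \<le> 1" for n using t01[of n] by (simp_all add: t_def)
    show ?thesis by (rule Fin_lower[where f=f, OF f_sums lim' a]) 
  qed

  have "{\<omega>\<in>space M. infinite (cone_set d (\<lambda>v. R v \<omega>))} = space M - Fin"
    unfolding Fin_def by auto
  then have "measure M {\<omega>\<in>space M. infinite (cone_set d (\<lambda>v. R v \<omega>))} = 1 - prob Fin"
    using prob_compl[OF Fin_events] by simp
  then show ?thesis using Fu psiL Fl by simp
qed

end
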